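(* Let $1\le p\le 2$, $m\geq1$ and $M\geq2$. There is a constant $S_{m,M,p}\geq1$ such that for all $N\in\mathbb{N}$ and every array $(a_{n_1\ldots n_m})_{n_1,\ldots,n_m=1}^N$ of complex numbers, $$\Big(\sum_{n_1,\ldots,n_m=1}^N|a_{n_1\ldots n_m}|^2\Big)^{1/2}\le S_{m,M,p}\cdot E_{m,M,p}\big((a_{n_1\ldots n_m})_{n_1,\ldots,n_m=1}^N\big).$$ Moreover, for $M\ge3$ the (optimal) constant satisfies $S_{m,M,p}\le C\cdot r_M^{-m}$, where $C$ is the constant defined in the context.
   Context: $\Omega_M=\{2j\pi/M: j=0,\ldots,M-1\}$ and $$E_{m,M,p}\big((a_{n_1\ldots n_m})\big)=\Big(\Big(\frac1M\Big)^{Nm}\sum_{(t^{(1)},\ldots,t^{(m)})\in(\Omega_M^N)^m}\Big|\sum_{n_1,\ldots,n_m=1}^N a_{n_1\ldots n_m}e^{it^{(1)}_{n_1}}\cdots e^{it^{(m)}_{n_m}}\Big|^p\Big)^{1/p}.$$ $r_M=\left(\frac12+\frac12\cos\left(\frac{2\pi}{M}\right)\right)^{1/2}$. Let $p^*$ be the conjugate exponent of $p$ ($p^*=\infty$ if $p=1$), $X_{p^*}=\ell_{p^*}(\mathbb{C})$ if $p^*<\infty$ and $X_\infty=c_0(\mathbb{C})$, and $(e_k)$ the canonical unit vectors. $C=C^{\sigma_{m+1},(p^*,\infty,\ldots,\infty)\mathbb{C}}_{(2,\ldots,2,p)}$ is the smallest constant such that for every continuous $(m+1)$-linear form $T:X_{p^*}\times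 c_0\times\cdots\times c_0\to\mathbb{C}$, $$\Big(\sum_{i_2,\ldots,i_{m+1}=1}^\infty\Big(\sum_{i_1=1}^\infty|T(e_{i_1},\ldots,e_{i_{m+1}})|^p\Big)^{2/p}\Big)^{1/2}\le C\|T\|,$$ with $\|T\|$ the usual sup norm over products of unit balls. *)

theory Defs
  imports "HOL-Analysis.Analysis"
begin

text \<open>Multi-indices (n_1,...,n_m) with 1 <= n_k <= N are encoded 0-based as lists of
  length m with entries in {..<N}.\<close>
definition idx :: "nat \<Rightarrow> nat \<Rightarrow> nat list set" where
  "idx m N = {ns. length ns = m \<and> set ns \<subseteq> {..<N}}"

text \<open>A point (t^(1),...,t^(m)) of (Omega_M^N)^m is encoded by t :: nat*nat => nat with
  t^(k+1)_(n+1) = 2 pi t(k,n) / M, t(k,n) in {..<M}.\<close>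
definition E_MMp :: "nat \<Rightarrow> nat \<Rightarrow> real \<Rightarrow> nat \<Rightarrow> (nat list \<Rightarrow> complex) \<Rightarrow> real" where
  "E_MMp m M p N a =
     ((1 / real M) ^ (N * m) *
      (\<Sum>t \<in> PiE ({..<m} \<times> {..<N}) (\<lambda>_. {..<M}).
          cmod (\<Sum>ns \<in> idx m N. a ns * (\<Prod>k<m. cis (2 * pi * real (t (k, ns ! k)) / real M))) powr p))
     powr (1 / p)"

definition l2norm_arr :: "nat \<Rightarrow> nat \<Rightarrow> (nat list \<Rightarrow> complex) \<Rightarrow> real" where
  "l2norm_arr m N a = sqrt (\<Sum>ns \<in> idx m N. (cmod (a ns))\<^sup>2)"

definition r_M :: "nat \<Rightarrow> real" where
  "r_M M = (1/2 + 1/2 * cos (2 * pi / real M)) powr (1/2)"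

definition c0_mem :: "(nat \<Rightarrow> complex) \<Rightarrow> bool" where
  "c0_mem x \<longleftrightarrow> x \<longlonglongrightarrow> 0"

definition sup_norm :: "(nat \<Rightarrow> complex) \<Rightarrow> real" where
  "sup_norm x = Sup (range (\<lambda>i. cmod (x i)))"

definition conj_exp :: "real \<Rightarrow> real" where
  "conj_exp p = p / (p - 1)"

definition X_mem :: "real \<Rightarrow> (nat \<Rightarrow> complex) \<Rightarrow> bool" where
  "X_mem p x \<longleftrightarrow> (if p = 1 then c0_mem x else summable (\<lambda>i. cmod (x i) powr conj_exp p))"

definition X_norm :: "real \<Rightarrow> (nat \<Rightarrow> complex) \<Rightarrow> real" where
  "X_norm p x = (if p = 1 then sup_norm x
                 else (\<Sum>i. cmod (x i) powr conj_exp p) powr (1 / conj_exp p))"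

text \<open>An argument tuple (x_1,...,x_{m+1}) is encoded as x :: nat => (nat => complex) with
  slot k (0-based, k <= m); slots beyond m are required to be zero.\<close>
definition in_dom :: "nat \<Rightarrow> real \<Rightarrow> (nat \<Rightarrow> nat \<Rightarrow> complex) \<Rightarrow> bool" where
  "in_dom m p x \<longleftrightarrow> X_mem p (x 0) \<and> (\<forall>k\<in>{1..m}. c0_mem (x k)) \<and> (\<forall>k>m. x k = (\<lambda>_. 0))"

definition in_ball :: "nat \<Rightarrow> real \<Rightarrow> (nat \<Rightarrow> nat \<Rightarrow> complex) \<Rightarrow> bool" where
  "in_ball m p x \<longleftrightarrow> in_dom m p x \<and> X_norm p (x 0) \<le> 1 \<and> (\<forall>k\<in>{1..m}. sup_norm (x k) \<le> 1)"

definition multilinear_form :: "nat \<Rightarrow> real \<Rightarrow> ((nat \<Rightarrow> nat \<Rightarrow> complex) \<Rightarrow> complex) \<Rightarrow> bool" where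
  "multilinear_form m p T \<longleftrightarrow>
     (\<forall>x k y z c. k \<le> m \<longrightarrow> in_dom m p (x(k := y)) \<longrightarrow> in_dom m p (x(k := z)) \<longrightarrow>
        T (x(k := (\<lambda>i. c * y i + z i))) = c * T (x(k := y)) + T (x(k := z)))"

text \<open>Continuity of a multilinear form is equivalent to boundedness on the product of unit balls.\<close>
definition bounded_form :: "nat \<Rightarrow> real \<Rightarrow> ((nat \<Rightarrow> nat \<Rightarrow> complex) \<Rightarrow> complex) \<Rightarrow> bool" where
  "bounded_form m p T \<longleftrightarrow> bdd_above {cmod (T x) | x. in_ball m p x}"

definition form_norm :: "nat \<Rightarrow> real \<Rightarrow> ((nat \<Rightarrow> nat \<Rightarrow> complex) \<Rightarrow> complex) \<Rightarrow> real" where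
  "form_norm m p T = Sup {cmod (T x) | x. in_ball m p x}"

definition unitvec :: "nat \<Rightarrow> nat \<Rightarrow> complex" where
  "unitvec j = (\<lambda>i. if i = j then 1 else 0)"

definition coef :: "nat \<Rightarrow> ((nat \<Rightarrow> nat \<Rightarrow> complex) \<Rightarrow> complex) \<Rightarrow> nat \<Rightarrow> nat list \<Rightarrow> complex" where
  "coef m T j is = T (\<lambda>k. if k = 0 then unitvec j
                          else if k \<le> m then unitvec (is ! (k - 1)) else (\<lambda>_. 0))"

text \<open>c satisfies the mixed (2,...,2,p) inequality defining
  C = C^{sigma_{m+1},(p*,infty,...,infty)}_{(2,...,2,p)}; C is the smallest such c.\<close>
definition C_admissible :: "nat \<Rightarrow> real \<Rightarrow> real \<Rightarrow> bool" where
  "C_admissible m p c \<longleftrightarrow>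
     (\<forall>T. multilinear_form m p T \<and> bounded_form m p T \<longrightarrow>
        (\<forall>is. length is = m \<longrightarrow> (\<lambda>j. cmod (coef m T j is) powr p) summable_on UNIV) \<and>
        (\<lambda>is. (\<Sum>\<^sub>\<infinity>j. cmod (coef m T j is) powr p) powr (2 / p)) summable_on {is. length is = m} \<and>
        sqrt (\<Sum>\<^sub>\<infinity>is\<in>{is. length is = m}. (\<Sum>\<^sub>\<infinity>j. cmod (coef m T j is) powr p) powr (2 / p))
          \<le> c * form_norm m p T)"

end

theory Submission
  imports Defs
begin


lemma sum_PiE_insert:
  assumes "x \<notin> S"
  shows "(\<Sum>f \<in> PiE (insert x S) T. g f) = (\<Sum>y\<in>T x. \<Sum>h\<in>PiE S T. g (h(x:=y)))"
proof -
  have "(\<Sum>f \<in> PiE (insert x S) T. g f) = (\<Sum>p\<in>T x \<times> PiE S T. g ((\<lambda>(y, h). h(x := y)) p))"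
    unfolding PiE_insert_eq by (rule sum.reindex[OF inj_combinator[OF assms], unfolded comp_def])
  also have "\<dots> = (\<Sum>(y,h)\<in>T x \<times> PiE S T. g (h(x:=y)))"
    by (rule sum.cong) auto
  also have "\<dots> = (\<Sum>y\<in>T x. \<Sum>h\<in>PiE S T. g (h(x:=y)))"
    by (rule sum.cartesian_product[symmetric])
  finally show ?thesis .
qed

definition om :: "nat \<Rightarrow> nat \<Rightarrow> complex" where
  "om M y = cis (2 * pi * real y / real M)"

lemma cmod_om[simp]: "cmod (om M y) = 1" by (simp add: om_def)

lemma root_sum:
  assumes "2 \<le> M" shows "(\<Sum>y<M. om M y) = 0"
proof -
  define z where "z = cis (2 * pi / real M)"
  have pw: "om M y = z ^ y" for y unfolding z_def om_def Complex.DeMoivre by (rule arg_cong[where f=cis]) simp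
  have zM: "z ^ M = 1" using assms by (simp add: z_def Complex.DeMoivre)
  have "z \<noteq> 1"
  proof
    assume "z = 1"
    then have "cos (2 * pi / real M) = 1" unfolding z_def by (metis cis.sel(1) one_complex.sel(1))
    then obtain n :: int where n: "2 * pi / real M = real_of_int n * 2 * pi" using cos_one_2pi_int by blast
    have pos: "0 < 2 * pi / real M" using assms by simp
    have lt: "2 * pi / real M < 2 * pi" using assms pi_gt_zero by (simp add: divide_less_eq)
    from pos lt n have "0 < real_of_int n" "real_of_int n < 1"
      by (simp_all add: zero_less_mult_iff mult_less_cancel_right1 pi_gt_zero)
    then show False by simp
  qed
  then show ?thesis using zM by (simp add: pw sum_gp_strict)
qed

lemma root_sum_cnj:
  assumes "2 \<le> M" shows "(\<Sum>y<M. cnj (om M y)) = 0"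
  using root_sum[OF assms] by (metis complex_cnj_zero cnj_sum)

lemma sq_expand:
  "(cmod (g + c * z))\<^sup>2 = (cmod g)\<^sup>2 + (cmod c)\<^sup>2 * (cmod z)\<^sup>2 + 2 * Re (g * cnj (c * z))"
  unfolding cmod_power2 by (simp add: algebra_simps power2_eq_square)

lemma avg2:
  assumes "2 \<le> M"
  shows "(\<Sum>y<M. (cmod (g + c * om M y))\<^sup>2) = real M * ((cmod g)\<^sup>2 + (cmod c)\<^sup>2)"
proof -
  have "(\<Sum>y<M. (cmod (g + c * om M y))\<^sup>2)
      = (\<Sum>y<M. (cmod g)\<^sup>2 + (cmod c)\<^sup>2) + 2 * Re (g * cnj c * (\<Sum>y<M. cnj (om M y)))"
    by (simp add: sq_expand sum.distrib sum_distrib_left Re_sum mult.assoc)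
  then show ?thesis using root_sum_cnj[OF assms] by simp
qed

lemma avg4:
  assumes "2 \<le> M"
  shows "(\<Sum>y<M. (cmod (g + c * om M y))^4)
     \<le> real M * ((cmod g)\<^sup>2 + (cmod c)\<^sup>2)\<^sup>2 + 4 * real M * (cmod g)\<^sup>2 * (cmod c)\<^sup>2"
proof -
  define A where "A = (cmod g)\<^sup>2 + (cmod c)\<^sup>2"
  define w where "w y = Re (g * cnj (c * om M y))" for y
  have e: "(cmod (g + c * om M y))^4 = A\<^sup>2 + 4 * A * w y + 4 * (w y)\<^sup>2" for y
  proof -
    have "(cmod (g + c * om M y))^4 = ((cmod (g + c * om M y))\<^sup>2)\<^sup>2" by simp
    also have "\<dots> = (A + 2 * w y)\<^sup>2" by (simp add: sq_expand A_def w_def)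
    finally show ?thesis by (simp add: power2_eq_square algebra_simps)
  qed
  have wb: "(w y)\<^sup>2 \<le> (cmod g)\<^sup>2 * (cmod c)\<^sup>2" for y
  proof -
    have "\<bar>w y\<bar> \<le> cmod (g * cnj (c * om M y))" unfolding w_def by (rule abs_Re_le_cmod)
    also have "\<dots> = cmod g * cmod c" by (simp add: norm_mult)
    finally have "\<bar>w y\<bar> \<le> cmod g * cmod c" .
    then have "\<bar>w y\<bar>\<^sup>2 \<le> (cmod g * cmod c)\<^sup>2" by (metis abs_ge_zero power_mono)
    then show ?thesis by (simp add: power_mult_distrib)
  qed
  have "(\<Sum>y<M. w y) = Re (\<Sum>y<M. g * cnj c * cnj (om M y))"
    unfolding w_def Re_sum complex_cnj_mult mult.assoc by (rule refl)
  also have "\<dots> = Re (g * cnj c * (\<Sum>y<M. cnj (om M y)))"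
    by (simp only: sum_distrib_left)
  finally have sw: "(\<Sum>y<M. w y) = 0"
    using root_sum_cnj[OF assms] by simp
  have "(\<Sum>y<M. (cmod (g + c * om M y))^4) = real M * A\<^sup>2 + 4 * A * (\<Sum>y<M. w y) + 4 * (\<Sum>y<M. (w y)\<^sup>2)"
    by (simp add: e sum.distrib sum_distrib_left)
  also have "\<dots> \<le> real M * A\<^sup>2 + 4 * (\<Sum>y<M. (cmod g)\<^sup>2 * (cmod c)\<^sup>2)"
  proof -
    have "(\<Sum>y<M. (w y)\<^sup>2) \<le> (\<Sum>y<M. (cmod g)\<^sup>2 * (cmod c)\<^sup>2)" by (rule sum_mono) (rule wb)
    then show ?thesis using sw by simp
  qed
  finally show ?thesis by (simp add: A_def)
qed

definition f1 :: "nat \<Rightarrow> nat \<Rightarrow> (nat \<Rightarrow> complex) \<Rightarrow> (nat \<Rightarrow> nat) \<Rightarrow> complex" where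
  "f1 M N b s = (\<Sum>n<N. b n * om M (s n))"

lemma f1_upd: "f1 M (Suc N) b (h(N:=y)) = f1 M N b h + b N * om M y"
proof -
  have "(\<Sum>n<N. b n * om M ((h(N:=y)) n)) = (\<Sum>n<N. b n * om M (h n))"
    by (rule sum.cong) auto
  then show ?thesis by (simp add: f1_def)
qed

lemma moments:
  assumes "2 \<le> M"
  shows "(\<Sum>s\<in>PiE {..<N} (\<lambda>_. {..<M}). (cmod (f1 M N b s))\<^sup>2) = real M ^ N * (\<Sum>n<N. (cmod (b n))\<^sup>2)
    \<and> (\<Sum>s\<in>PiE {..<N} (\<lambda>_. {..<M}). (cmod (f1 M N b s))^4) \<le> 3 * real M ^ N * (\<Sum>n<N. (cmod (b n))\<^sup>2)\<^sup>2"
proof (induction N)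
  case 0
  then show ?case by (simp add: f1_def)
next
  case (Suc N)
  define P where "P = PiE {..<N} (\<lambda>_::nat. {..<M})"
  define S where "S = (\<Sum>n<N. (cmod (b n))\<^sup>2)"
  define c where "c = b N"
  have IH2: "(\<Sum>h\<in>P. (cmod (f1 M N b h))\<^sup>2) = real M ^ N * S"
    and IH4: "(\<Sum>h\<in>P. (cmod (f1 M N b h))^4) \<le> 3 * real M ^ N * S\<^sup>2"
    using Suc.IH by (simp_all add: P_def S_def)
  have dec: "(\<Sum>s\<in>PiE {..<Suc N} (\<lambda>_. {..<M}). G s) = (\<Sum>h\<in>P. \<Sum>y<M. G (h(N:=y)))" for G
    unfolding lessThan_Suc P_def by (subst sum_PiE_insert) (auto intro: sum.swap)
  have cardP: "card P = M ^ N" by (simp add: P_def card_PiE)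
  have S': "(\<Sum>n<Suc N. (cmod (b n))\<^sup>2) = S + (cmod c)\<^sup>2" by (simp add: S_def c_def)
  have "(\<Sum>s\<in>PiE {..<Suc N} (\<lambda>_. {..<M}). (cmod (f1 M (Suc N) b s))\<^sup>2)
      = (\<Sum>h\<in>P. \<Sum>y<M. (cmod (f1 M N b h + c * om M y))\<^sup>2)"
    by (simp add: dec f1_upd c_def)
  also have "\<dots> = (\<Sum>h\<in>P. real M * ((cmod (f1 M N b h))\<^sup>2 + (cmod c)\<^sup>2))"
    by (simp add: avg2[OF assms])
  also have "\<dots> = real M * (\<Sum>h\<in>P. (cmod (f1 M N b h))\<^sup>2) + real M * real (card P) * (cmod c)\<^sup>2"
    unfolding distrib_left sum.distrib sum_distrib_left[symmetric] by simp
  also have "card P = M ^ N" by (simp add: P_def card_PiE)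
  finally have m2: "(\<Sum>s\<in>PiE {..<Suc N} (\<lambda>_. {..<M}). (cmod (f1 M (Suc N) b s))\<^sup>2)
     = real M ^ Suc N * (\<Sum>n<Suc N. (cmod (b n))\<^sup>2)"
    by (simp add: IH2 S' algebra_simps S_def c_def)
  have "(\<Sum>s\<in>PiE {..<Suc N} (\<lambda>_. {..<M}). (cmod (f1 M (Suc N) b s))^4)
      = (\<Sum>h\<in>P. \<Sum>y<M. (cmod (f1 M N b h + c * om M y))^4)"
    by (simp add: dec f1_upd c_def)
  also have "\<dots> \<le> (\<Sum>h\<in>P. real M * ((cmod (f1 M N b h))\<^sup>2 + (cmod c)\<^sup>2)\<^sup>2
         + 4 * real M * (cmod (f1 M N b h))\<^sup>2 * (cmod c)\<^sup>2)"
    by (rule sum_mono) (rule avg4[OF assms])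
  also have "\<dots> = real M * ((\<Sum>h\<in>P. (cmod (f1 M N b h))^4) + 6 * (cmod c)\<^sup>2 * (\<Sum>h\<in>P. (cmod (f1 M N b h))\<^sup>2)
          + real (card P) * (cmod c)^4)"
  proof -
    have "(\<Sum>h\<in>P. real M * ((cmod (f1 M N b h))\<^sup>2 + (cmod c)\<^sup>2)\<^sup>2
         + 4 * real M * (cmod (f1 M N b h))\<^sup>2 * (cmod c)\<^sup>2) =
       (\<Sum>h\<in>P. real M * (cmod (f1 M N b h))^4 + (real M * (6 * (cmod c)\<^sup>2)) * (cmod (f1 M N b h))\<^sup>2 + real M * (cmod c)^4)"
      by (rule sum.cong[OF refl]) (simp add: algebra_simps power2_eq_square power4_eq_xxxx)
    also have "\<dots> = real M * (\<Sum>h\<in>P. (cmod (f1 M N b h))^4) + (real M * (6 * (cmod c)\<^sup>2)) * (\<Sum>h\<in>P. (cmod (f1 M N b h))\<^sup>2)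
          + real (card P) * (real M * (cmod c)^4)"
      unfolding sum.distrib sum_distrib_left[symmetric] by simp
    finally show ?thesis by (simp add: algebra_simps)
  qed
  also have "\<dots> \<le> real M * (3 * real M ^ N * S\<^sup>2 + 6 * (cmod c)\<^sup>2 * (real M ^ N * S) + real M ^ N * (cmod c)^4)"
    using IH4 by (simp add: IH2 cardP mult_left_mono)
  also have "\<dots> \<le> 3 * real M ^ Suc N * (S + (cmod c)\<^sup>2)\<^sup>2"
  proof -
    have "0 \<le> real M ^ N * (cmod c)^4" by simp
    then have "3 * real M ^ N * S\<^sup>2 + 6 * (cmod c)\<^sup>2 * (real M ^ N * S) + real M ^ N * (cmod c)^4
        \<le> 3 * real M ^ N * (S + (cmod c)\<^sup>2)\<^sup>2"
      by (simp add: power2_eq_square power4_eq_xxxx algebra_simps)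
    then have "real M * (3 * real M ^ N * S\<^sup>2 + 6 * (cmod c)\<^sup>2 * (real M ^ N * S) + real M ^ N * (cmod c)^4)
        \<le> real M * (3 * real M ^ N * (S + (cmod c)\<^sup>2)\<^sup>2)" by (rule mult_left_mono) simp
    then show ?thesis by (simp add: algebra_simps)
  qed
  finally show ?case using m2 S' by simp
qed

lemma quartic_ineq:
  fixes x L :: real assumes "0 \<le> x" "0 \<le> L"
  shows "3 * L\<^sup>2 * x\<^sup>2 \<le> 2 * L^3 * x + x^4"
proof -
  have "0 \<le> x * ((x - L)\<^sup>2 * (x + 2 * L))" using assms by simp
  then show ?thesis by (simp add: power2_eq_square power3_eq_cube power4_eq_xxxx algebra_simps)
qed

lemma khin1:
  assumes "2 \<le> M"
  shows "sqrt (\<Sum>n<N. (cmod (b n))\<^sup>2) \<le> 2 * ((1 / real M) ^ N * (\<Sum>s\<in>PiE {..<N} (\<lambda>_. {..<M}). cmod (f1 M N b s)))"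
proof -
  define P where "P = PiE {..<N} (\<lambda>_::nat. {..<M})"
  define S where "S = (\<Sum>n<N. (cmod (b n))\<^sup>2)"
  define X where "X s = cmod (f1 M N b s)" for s
  define A where "A = (1 / real M) ^ N * (\<Sum>s\<in>P. X s)"
  define \<sigma> where "\<sigma> = sqrt S"
  have S0: "0 \<le> S" by (simp add: S_def sum_nonneg)
  have Ss: "S = \<sigma>\<^sup>2" using S0 by (simp add: \<sigma>_def)
  have s0: "0 \<le> \<sigma>" by (simp add: \<sigma>_def S0)
  have A0: "0 \<le> A" by (simp add: A_def X_def sum_nonneg)
  have m2: "(\<Sum>s\<in>P. (X s)\<^sup>2) = real M ^ N * S" and m4: "(\<Sum>s\<in>P. (X s)^4) \<le> 3 * real M ^ N * S\<^sup>2"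
    using moments[OF assms, of N b] by (simp_all add: P_def X_def S_def)
  define L where "L = 2 * \<sigma>"
  have L0: "0 \<le> L" using s0 by (simp add: L_def)
  have "(\<Sum>s\<in>P. 3 * L\<^sup>2 * (X s)\<^sup>2) \<le> (\<Sum>s\<in>P. 2 * L^3 * X s + (X s)^4)"
    by (rule sum_mono) (rule quartic_ineq, simp add: X_def, rule L0)
  then have "3 * L\<^sup>2 * (real M ^ N * S) \<le> 2 * L^3 * (\<Sum>s\<in>P. X s) + 3 * real M ^ N * S\<^sup>2"
    using m2 m4 by (simp add: sum.distrib sum_distrib_left[symmetric])
  then have "(1 / real M) ^ N * (3 * L\<^sup>2 * (real M ^ N * S)) \<le> (1 / real M) ^ N * (2 * L^3 * (\<Sum>s\<in>P. X s) + 3 * real M ^ N * S\<^sup>2)"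
    by (rule mult_left_mono) simp
  moreover have vu: "real M ^ N * (1 / real M) ^ N = 1" using assms by (simp add: power_one_over)
  moreover have "(1 / real M) ^ N * (3 * L\<^sup>2 * (real M ^ N * S)) = 3 * L\<^sup>2 * S * (real M ^ N * (1 / real M) ^ N)"
    by (simp add: algebra_simps)
  moreover have "(1 / real M) ^ N * (2 * L^3 * (\<Sum>s\<in>P. X s) + 3 * real M ^ N * S\<^sup>2)
     = 2 * L^3 * A + 3 * S\<^sup>2 * (real M ^ N * (1 / real M) ^ N)"
    unfolding A_def by (simp add: algebra_simps)
  ultimately have "3 * L\<^sup>2 * S \<le> 2 * L^3 * A + 3 * S\<^sup>2"
    by simp
  then have "12 * \<sigma>^4 \<le> 16 * \<sigma>^3 * A + 3 * \<sigma>^4"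
    by (simp add: L_def Ss power2_eq_square power3_eq_cube power4_eq_xxxx algebra_simps)
  then have h: "\<sigma>^3 * (9 * \<sigma>) \<le> \<sigma>^3 * (16 * A)"
    by (simp add: power3_eq_cube power4_eq_xxxx algebra_simps)
  have "\<sigma> \<le> 2 * A"
  proof (cases "\<sigma> = 0")
    case True then show ?thesis using A0 by simp
  next
    case False
    then have "0 < \<sigma>^3" using s0 by simp
    then have "9 * \<sigma> \<le> 16 * A" using h by (simp add: mult_le_cancel_left_pos)
    then show ?thesis using A0 by linarith
  qed
  then show ?thesis by (simp add: \<sigma>_def S_def A_def X_def P_def)
qed



definition Tset :: "nat \<Rightarrow> nat \<Rightarrow> nat \<Rightarrow> (nat \<times> nat \<Rightarrow> nat) set" where
  "Tset M m N = PiE ({..<m} \<times> {..<N}) (\<lambda>_. {..<M})"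

definition Fm :: "nat \<Rightarrow> nat \<Rightarrow> nat \<Rightarrow> (nat list \<Rightarrow> complex) \<Rightarrow> (nat \<times> nat \<Rightarrow> nat) \<Rightarrow> complex" where
  "Fm M m N a t = (\<Sum>ns\<in>idx m N. a ns * (\<Prod>k<m. cis (2 * pi * real (t (k, ns ! k)) / real M)))"

lemma E_MMp_alt: "E_MMp m M p N a = ((1 / real M) ^ (N * m) * (\<Sum>t\<in>Tset M m N. cmod (Fm M m N a t) powr p)) powr (1 / p)"
  unfolding E_MMp_def Tset_def Fm_def by simp

lemma finite_idx[simp]: "finite (idx m N)"
proof -
  have "idx m N \<subseteq> {xs. set xs \<subseteq> {..<N} \<and> length xs = m}" by (auto simp: idx_def)
  then show ?thesis using finite_lists_length_eq[of "{..<N}" m] by (rule finite_subset) simp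
qed

lemma finite_Tset[simp]: "finite (Tset M m N)"
  unfolding Tset_def by (rule finite_PiE) auto

lemma card_Tset: "card (Tset M m N) = M ^ (N * m)"
  unfolding Tset_def by (simp add: card_PiE card_cartesian_product mult.commute)

lemma idx_0: "idx 0 N = {[]}" by (auto simp: idx_def)

lemma idx_Suc_sum: "(\<Sum>ns\<in>idx (Suc m) N. g ns) = (\<Sum>ns\<in>idx m N. \<Sum>n<N. g (ns @ [n]))"
proof -
  have bij: "bij_betw (\<lambda>(ns, n). ns @ [n]) (idx m N \<times> {..<N}) (idx (Suc m) N)"
  proof (rule bij_betw_byWitness[where f'="\<lambda>xs. (butlast xs, last xs)"])
    show "\<forall>a\<in>idx m N \<times> {..<N}. (butlast ((\<lambda>(ns, n). ns @ [n]) a), last ((\<lambda>(ns, n). ns @ [n]) a)) = a"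
      by auto
    show "\<forall>a'\<in>idx (Suc m) N. (\<lambda>(ns, n). ns @ [n]) (butlast a', last a') = a'"
      by (auto simp: idx_def) (metis append_butlast_last_id list.size(3) nat.simps(3))
    show "(\<lambda>(ns, n). ns @ [n]) ` (idx m N \<times> {..<N}) \<subseteq> idx (Suc m) N"
      by (auto simp: idx_def)
    show "(\<lambda>xs. (butlast xs, last xs)) ` idx (Suc m) N \<subseteq> idx m N \<times> {..<N}"
    proof
      fix y assume "y \<in> (\<lambda>xs. (butlast xs, last xs)) ` idx (Suc m) N"
      then obtain xs where xs: "xs \<in> idx (Suc m) N" "y = (butlast xs, last xs)" by auto
      then have "xs \<noteq> []" by (auto simp: idx_def)
      then have "last xs \<in> set xs" by simp
      moreover have "set (butlast xs) \<subseteq> set xs" by (rule in_set_butlastD[THEN subsetI])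
      ultimately show "y \<in> idx m N \<times> {..<N}" using xs by (auto simp: idx_def)
    qed
  qed
  have "(\<Sum>ns\<in>idx (Suc m) N. g ns) = (\<Sum>p\<in>idx m N \<times> {..<N}. g ((\<lambda>(ns, n). ns @ [n]) p))"
    by (rule sum.reindex_bij_betw[OF bij, symmetric])
  also have "\<dots> = (\<Sum>(ns,n)\<in>idx m N \<times> {..<N}. g (ns @ [n]))"
    by (rule sum.cong) auto
  also have "\<dots> = (\<Sum>ns\<in>idx m N. \<Sum>n<N. g (ns @ [n]))"
    by (rule sum.cartesian_product[symmetric])
  finally show ?thesis .
qed

definition mrg :: "nat \<Rightarrow> nat \<Rightarrow> (nat \<times> nat \<Rightarrow> nat) \<Rightarrow> (nat \<Rightarrow> nat) \<Rightarrow> (nat \<times> nat \<Rightarrow> nat)" where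
  "mrg m N u s = (\<lambda>(k, n). if k < m then u (k, n) else if k = m \<and> n < N then s n else undefined)"

lemma Tset_Suc_sum:
  "(\<Sum>t\<in>Tset M (Suc m) N. g t) = (\<Sum>u\<in>Tset M m N. \<Sum>s\<in>PiE {..<N} (\<lambda>_. {..<M}). g (mrg m N u s))"
proof -
  define f' where "f' t = (restrict t ({..<m} \<times> {..<N}), (\<lambda>n. if n < N then t (m, n) else undefined))"
    for t :: "nat \<times> nat \<Rightarrow> nat"
  have bij: "bij_betw (\<lambda>(u, s). mrg m N u s) (Tset M m N \<times> PiE {..<N} (\<lambda>_. {..<M})) (Tset M (Suc m) N)"
  proof (rule bij_betw_byWitness[where f'=f'])
    show "\<forall>a\<in>Tset M m N \<times> PiE {..<N} (\<lambda>_. {..<M}). f' ((\<lambda>(u, s). mrg m N u s) a) = a"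
    proof clarify
      fix u s assume u: "u \<in> Tset M m N" and s: "s \<in> PiE {..<N} (\<lambda>_. {..<M})"
      have 1: "restrict (mrg m N u s) ({..<m} \<times> {..<N}) = u"
      proof
        fix x show "restrict (mrg m N u s) ({..<m} \<times> {..<N}) x = u x"
          using u by (cases x) (auto simp: mrg_def Tset_def PiE_def extensional_def)
      qed
      have 2: "(\<lambda>n. if n < N then mrg m N u s (m, n) else undefined) = s"
      proof
        fix n show "(if n < N then mrg m N u s (m, n) else undefined) = s n"
          using s by (auto simp: mrg_def PiE_def extensional_def)
      qed
      show "f' (mrg m N u s) = (u, s)"
        by (simp add: f'_def 1 2)
    qed
    show "\<forall>a'\<in>Tset M (Suc m) N. (\<lambda>(u, s). mrg m N u s) (f' a') = a'"
    proof
      fix t assume t: "t \<in> Tset M (Suc m) N"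
      show "(case f' t of (u, s) \<Rightarrow> mrg m N u s) = t"
      proof
        fix x show "(case f' t of (u, s) \<Rightarrow> mrg m N u s) x = t x"
          using t by (cases x) (auto simp: f'_def mrg_def Tset_def PiE_def extensional_def)
      qed
    qed
    show "(\<lambda>(u, s). mrg m N u s) ` (Tset M m N \<times> PiE {..<N} (\<lambda>_. {..<M})) \<subseteq> Tset M (Suc m) N"
    proof clarify
      fix u s assume u: "u \<in> Tset M m N" and s: "s \<in> PiE {..<N} (\<lambda>_. {..<M})"
      have a: "mrg m N u s x \<in> {..<M}" if "x \<in> {..<Suc m} \<times> {..<N}" for x
        using that u s by (cases x) (auto simp: mrg_def Tset_def PiE_iff)
      have b: "mrg m N u s x = undefined" if "x \<notin> {..<Suc m} \<times> {..<N}" for x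
      proof (cases x)
        case (Pair k n)
        show ?thesis
        proof (cases "k < m")
          case True
          then have "n \<ge> N" using that Pair by auto
          then have "(k, n) \<notin> {..<m} \<times> {..<N}" by auto
          then have "u (k, n) = undefined" using u by (simp add: Tset_def PiE_def extensional_def)
          then show ?thesis using True Pair by (simp add: mrg_def)
        next
          case False
          then show ?thesis using that Pair by (auto simp: mrg_def)
        qed
      qed
      show "mrg m N u s \<in> Tset M (Suc m) N"
        unfolding Tset_def using a b by (auto simp: PiE_iff extensional_def)
    qed
    show "f' ` Tset M (Suc m) N \<subseteq> Tset M m N \<times> PiE {..<N} (\<lambda>_. {..<M})"
    proof (rule image_subsetI)
      fix t assume t: "t \<in> Tset M (Suc m) N"
      have 1: "restrict t ({..<m} \<times> {..<N}) \<in> Tset M m N"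
        using t unfolding Tset_def PiE_iff by auto
      have 2: "(\<lambda>n. if n < N then t (m, n) else undefined) \<in> PiE {..<N} (\<lambda>_. {..<M})"
        using t unfolding Tset_def PiE_iff extensional_def by auto
      show "f' t \<in> Tset M m N \<times> PiE {..<N} (\<lambda>_. {..<M})" using 1 2 by (simp add: f'_def)
    qed
  qed
  have "(\<Sum>t\<in>Tset M (Suc m) N. g t) = (\<Sum>p\<in>Tset M m N \<times> PiE {..<N} (\<lambda>_. {..<M}). g ((\<lambda>(u, s). mrg m N u s) p))"
    by (rule sum.reindex_bij_betw[OF bij, symmetric])
  also have "\<dots> = (\<Sum>(u,s)\<in>Tset M m N \<times> PiE {..<N} (\<lambda>_. {..<M}). g (mrg m N u s))"
    by (rule sum.cong) auto
  also have "\<dots> = (\<Sum>u\<in>Tset M m N. \<Sum>s\<in>PiE {..<N} (\<lambda>_. {..<M}). g (mrg m N u s))"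
    by (rule sum.cartesian_product[symmetric])
  finally show ?thesis .
qed

lemma Fm_mrg:
  "Fm M (Suc m) N a (mrg m N u s) = f1 M N (\<lambda>n. Fm M m N (\<lambda>ns. a (ns @ [n])) u) s"
proof -
  have pr: "(\<Prod>k<Suc m. cis (2 * pi * real (mrg m N u s (k, (ns @ [n]) ! k)) / real M))
      = (\<Prod>k<m. cis (2 * pi * real (u (k, ns ! k)) / real M)) * om M (s n)"
    if "ns \<in> idx m N" "n < N" for ns n
  proof -
    have l: "length ns = m" using that by (simp add: idx_def)
    have "(\<Prod>k<m. cis (2 * pi * real (mrg m N u s (k, (ns @ [n]) ! k)) / real M))
        = (\<Prod>k<m. cis (2 * pi * real (u (k, ns ! k)) / real M))"
      by (rule prod.cong) (auto simp: mrg_def nth_append l)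
    then show ?thesis using that l by (simp add: mrg_def om_def nth_append)
  qed
  have "Fm M (Suc m) N a (mrg m N u s) = (\<Sum>ns\<in>idx m N. \<Sum>n<N. a (ns @ [n]) *
      ((\<Prod>k<m. cis (2 * pi * real (u (k, ns ! k)) / real M)) * om M (s n)))"
    unfolding Fm_def idx_Suc_sum by (intro sum.cong refl) (simp add: pr del: prod.lessThan_Suc)
  also have "\<dots> = (\<Sum>n<N. \<Sum>ns\<in>idx m N. a (ns @ [n]) *
      (\<Prod>k<m. cis (2 * pi * real (u (k, ns ! k)) / real M)) * om M (s n))"
    by (subst sum.swap) (simp add: mult.assoc)
  also have "\<dots> = f1 M N (\<lambda>n. Fm M m N (\<lambda>ns. a (ns @ [n])) u) s"
    by (simp add: f1_def Fm_def sum_distrib_right)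
  finally show ?thesis .
qed

lemma L2_set_sum_le:
  assumes "finite U"
  shows "L2_set (\<lambda>n. \<Sum>u\<in>U. G n u) A \<le> (\<Sum>u\<in>U. L2_set (\<lambda>n. G n u) A)"
  using assms
proof (induction U rule: finite_induct)
  case empty then show ?case by (simp add: L2_set_def)
next
  case (insert x F)
  have "L2_set (\<lambda>n. \<Sum>u\<in>insert x F. G n u) A = L2_set (\<lambda>n. G n x + (\<Sum>u\<in>F. G n u)) A"
    using insert by simp
  also have "\<dots> \<le> L2_set (\<lambda>n. G n x) A + L2_set (\<lambda>n. \<Sum>u\<in>F. G n u) A"
    by (rule L2_set_triangle_ineq)
  also have "\<dots> \<le> L2_set (\<lambda>n. G n x) A + (\<Sum>u\<in>F. L2_set (\<lambda>n. G n u) A)"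
    using insert by simp
  finally show ?case using insert by simp
qed



lemma l2norm_Suc:
  "l2norm_arr (Suc m) N a = L2_set (\<lambda>n. l2norm_arr m N (\<lambda>ns. a (ns @ [n]))) {..<N}"
proof -
  have "(\<Sum>ns\<in>idx (Suc m) N. (cmod (a ns))\<^sup>2) = (\<Sum>n<N. \<Sum>ns\<in>idx m N. (cmod (a (ns @ [n])))\<^sup>2)"
    unfolding idx_Suc_sum by (rule sum.swap)
  also have "\<dots> = (\<Sum>n<N. (l2norm_arr m N (\<lambda>ns. a (ns @ [n])))\<^sup>2)"
    by (simp add: l2norm_arr_def sum_nonneg)
  finally show ?thesis by (simp add: l2norm_arr_def L2_set_def)
qed

lemma l2norm_nonneg: "0 \<le> l2norm_arr m N a"
  by (simp add: l2norm_arr_def sum_nonneg)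

lemma khin_m:
  assumes "2 \<le> M"
  shows "l2norm_arr m N a \<le> 2 ^ m * ((1 / real M) ^ (N * m) * (\<Sum>t\<in>Tset M m N. cmod (Fm M m N a t)))"
proof (induction m arbitrary: a)
  case 0
  have T: "Tset M 0 N = {\<lambda>_. undefined}" by (simp add: Tset_def)
  show ?case by (simp add: T Fm_def idx_0 l2norm_arr_def)
next
  case (Suc m)
  define an where "an n = (\<lambda>ns. a (ns @ [n]))" for n
  define w where "w = (1 / real M) ^ (N * m)"
  define X where "X n u = cmod (Fm M m N (an n) u)" for n u
  define U where "U = Tset M m N"
  define P where "P = PiE {..<N} (\<lambda>_::nat. {..<M})"
  have w0: "0 \<le> w" by (simp add: w_def)
  have "l2norm_arr (Suc m) N a = L2_set (\<lambda>n. l2norm_arr m N (an n)) {..<N}"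
    by (simp add: l2norm_Suc an_def)
  also have "\<dots> \<le> L2_set (\<lambda>n. 2 ^ m * (\<Sum>u\<in>U. w * X n u)) {..<N}"
  proof (rule L2_set_mono)
    fix n show "l2norm_arr m N (an n) \<le> 2 ^ m * (\<Sum>u\<in>U. w * X n u)"
      using Suc.IH[of "an n"] by (simp add: w_def X_def U_def sum_distrib_left)
  qed (simp add: l2norm_nonneg)
  also have "\<dots> = 2 ^ m * L2_set (\<lambda>n. \<Sum>u\<in>U. w * X n u) {..<N}"
    by (simp add: L2_set_right_distrib)
  also have "L2_set (\<lambda>n. \<Sum>u\<in>U. w * X n u) {..<N} \<le> (\<Sum>u\<in>U. L2_set (\<lambda>n. w * X n u) {..<N})"
    by (rule L2_set_sum_le) (simp add: U_def)
  also have "\<dots> = (\<Sum>u\<in>U. w * L2_set (\<lambda>n. X n u) {..<N})"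
    using w0 by (simp add: L2_set_right_distrib)
  also have "\<dots> \<le> (\<Sum>u\<in>U. w * (2 * ((1 / real M) ^ N * (\<Sum>s\<in>P. cmod (Fm M (Suc m) N a (mrg m N u s))))))"
  proof (rule sum_mono, rule mult_left_mono[OF _ w0])
    fix u
    have "L2_set (\<lambda>n. X n u) {..<N} = sqrt (\<Sum>n<N. (cmod (Fm M m N (an n) u))\<^sup>2)"
      by (simp add: L2_set_def X_def)
    also have "\<dots> \<le> 2 * ((1 / real M) ^ N * (\<Sum>s\<in>P. cmod (f1 M N (\<lambda>n. Fm M m N (an n) u) s)))"
      unfolding P_def by (rule khin1[OF assms])
    finally show "L2_set (\<lambda>n. X n u) {..<N} \<le> 2 * ((1 / real M) ^ N * (\<Sum>s\<in>P. cmod (Fm M (Suc m) N a (mrg m N u s))))"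
      by (simp add: Fm_mrg an_def)
  qed
  also have "\<dots> = 2 * ((1 / real M) ^ (N * Suc m) * (\<Sum>t\<in>Tset M (Suc m) N. cmod (Fm M (Suc m) N a t)))"
    by (simp add: Tset_Suc_sum U_def P_def w_def sum_distrib_left power_add algebra_simps)
  finally show ?case by (simp add: mult_left_mono algebra_simps)
qed



lemma holder_fin:
  fixes u v :: "'a \<Rightarrow> real"
  assumes A: "finite A" and p: "p > 1" and q: "q > 1" and pq: "1/p + 1/q = 1"
    and u: "\<And>x. x \<in> A \<Longrightarrow> 0 \<le> u x" and v: "\<And>x. x \<in> A \<Longrightarrow> 0 \<le> v x"
  shows "(\<Sum>x\<in>A. u x * v x) \<le> (\<Sum>x\<in>A. u x powr p) powr (1/p) * (\<Sum>x\<in>A. v x powr q) powr (1/q)"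
proof -
  define SU where "SU = (\<Sum>x\<in>A. u x powr p)"
  define SV where "SV = (\<Sum>x\<in>A. v x powr q)"
  define U where "U = SU powr (1/p)"
  define V where "V = SV powr (1/q)"
  show ?thesis
  proof (cases "SU = 0 \<or> SV = 0")
    case True
    then have "(\<forall>x\<in>A. u x = 0) \<or> (\<forall>x\<in>A. v x = 0)"
      using A p q u v by (auto simp: SU_def SV_def sum_nonneg_eq_0_iff)
    then have "(\<Sum>x\<in>A. u x * v x) = 0" by auto
    then show ?thesis by simp
  next
    case False
    have SU0: "0 < SU" using False by (simp add: SU_def sum_nonneg order_le_neq_trans)
    have SV0: "0 < SV" using False by (simp add: SV_def sum_nonneg order_le_neq_trans)
    have U0: "0 < U" and V0: "0 < V" using SU0 SV0 by (simp_all add: U_def V_def)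
    have Up: "U powr p = SU" using SU0 p by (simp add: U_def powr_powr)
    have Vq: "V powr q = SV" using SV0 q by (simp add: V_def powr_powr)
    have "(\<Sum>x\<in>A. (u x / U) * (v x / V)) \<le> (\<Sum>x\<in>A. (u x / U) powr p / p + (v x / V) powr q / q)"
      by (rule sum_mono, rule Youngs_inequality) (use p q pq u v U0 V0 in auto)
    also have "\<dots> = (\<Sum>x\<in>A. u x powr p) / (U powr p) / p + (\<Sum>x\<in>A. v x powr q) / (V powr q) / q"
      by (simp add: powr_divide sum.distrib sum_divide_distrib)
    also have "\<dots> = 1" using SU0 SV0 pq by (simp add: Up Vq SU_def[symmetric] SV_def[symmetric])
    finally have "(\<Sum>x\<in>A. u x * v x) / (U * V) \<le> 1"
      by (simp add: sum_divide_distrib)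
    then show ?thesis using U0 V0 by (simp add: U_def V_def SU_def SV_def)
  qed
qed

lemma power_mean:
  fixes u :: "'a \<Rightarrow> real"
  assumes A: "finite A" "A \<noteq> {}" and p: "1 \<le> p" and u: "\<And>x. x \<in> A \<Longrightarrow> 0 \<le> u x"
  shows "(1 / real (card A)) * (\<Sum>x\<in>A. u x) \<le> ((1 / real (card A)) * (\<Sum>x\<in>A. u x powr p)) powr (1/p)"
proof (cases "p = 1")
  case True
  have "(\<Sum>x\<in>A. u x powr 1) = (\<Sum>x\<in>A. u x)" using u by (intro sum.cong) auto
  then show ?thesis using True by (simp add: sum_nonneg u)
next
  case False
  then have p1: "p > 1" using p by simp
  define q where "q = p / (p - 1)"
  have q1: "q > 1" using p1 by (simp add: q_def)
  have pq: "1/p + 1/q = 1" using p1 by (simp add: q_def field_simps)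
  define K where "K = real (card A)"
  have K0: "K > 0" using A by (simp add: K_def card_gt_0_iff)
  have "(\<Sum>x\<in>A. u x * 1) \<le> (\<Sum>x\<in>A. u x powr p) powr (1/p) * (\<Sum>x\<in>A. 1 powr q) powr (1/q)"
    by (rule holder_fin) (use A p1 q1 pq u in auto)
  then have h: "(\<Sum>x\<in>A. u x) \<le> (\<Sum>x\<in>A. u x powr p) powr (1/p) * K powr (1/q)"
    by (simp add: K_def)
  have "(1 / K) * (\<Sum>x\<in>A. u x) \<le> (1 / K) * ((\<Sum>x\<in>A. u x powr p) powr (1/p) * K powr (1/q))"
    using h K0 by (simp add: divide_right_mono)
  also have "\<dots> = (\<Sum>x\<in>A. u x powr p) powr (1/p) * (K powr (1/q) / K)" by simp
  also have "K powr (1/q) / K = (1 / K) powr (1/p)"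
  proof -
    have "K powr (1/q) / K = K powr (1/q) / K powr 1" using K0 by simp
    also have "\<dots> = K powr (1/q - 1)" by (simp add: powr_diff)
    also have "1/q - 1 = - (1/p)" using pq by simp
    also have "K powr (- (1/p)) = (1/K) powr (1/p)" by (simp add: powr_minus_divide powr_divide)
    finally show ?thesis .
  qed
  also have "(\<Sum>x\<in>A. u x powr p) powr (1/p) * (1 / K) powr (1/p) = ((1 / K) * (\<Sum>x\<in>A. u x powr p)) powr (1/p)"
    by (simp add: powr_mult[symmetric] mult.commute)
  finally show ?thesis by (simp add: K_def)
qed

lemma Tset_ne: "1 \<le> M \<Longrightarrow> Tset M m N \<noteq> {}"
  by (auto simp add: Tset_def PiE_eq_empty_iff lessThan_empty_iff)

lemma part1:
  assumes p: "1 \<le> p" and M: "2 \<le> M"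
  shows "l2norm_arr m N a \<le> 2 ^ m * E_MMp m M p N a"
proof -
  have c: "(1 / real M) ^ (N * m) = 1 / real (card (Tset M m N))"
    by (simp add: card_Tset power_one_over)
  have "l2norm_arr m N a \<le> 2 ^ m * ((1 / real M) ^ (N * m) * (\<Sum>t\<in>Tset M m N. cmod (Fm M m N a t)))"
    by (rule khin_m[OF M])
  also have "(1 / real M) ^ (N * m) * (\<Sum>t\<in>Tset M m N. cmod (Fm M m N a t)) \<le> E_MMp m M p N a"
    unfolding E_MMp_alt c by (rule power_mean) (use M p Tset_ne in auto)
  finally show ?thesis by simp
qed



lemma rM_eq: assumes "2 \<le> M" shows "r_M M = cos (pi / real M)"
proof -
  have a1: "pi / real M \<le> pi / 2" using assms by (intro divide_left_mono) auto
  have a2: "0 \<le> pi / real M" by simp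
  have c0: "0 \<le> cos (pi / real M)"
    using a1 a2 by (intro cos_ge_zero) linarith+
  have "cos (2 * pi / real M) = cos (2 * (pi / real M))" by simp
  also have "\<dots> = 2 * (cos (pi / real M))\<^sup>2 - 1" by (rule cos_double_cos)
  finally have "1/2 + 1/2 * cos (2 * pi / real M) = (cos (pi / real M))\<^sup>2" by (simp add: field_simps)
  then show ?thesis using c0 by (simp add: r_M_def powr_half_sqrt)
qed

lemma om_mult: "om M a * om M b = om M (a + b)"
  by (simp add: om_def cis_mult add_divide_distrib distrib_left)

lemma cis_shift_int: "cis (x + 2 * pi * real_of_int k) = cis x"
proof -
  have "cis (x + 2 * pi * real_of_int k) = cis x * cis (2 * pi * real_of_int k)" by (rule cis_mult[symmetric])
  moreover have "cis (2 * pi * real_of_int k) = 1" by (rule cis_multiple_2pi) simp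
  ultimately show ?thesis by simp
qed

lemma cis_shift_nat: "cis (x + 2 * pi * real k) = cis x"
  using cis_shift_int[of x "int k"] by simp

lemma om_mod: assumes "0 < M" shows "om M (a mod M) = om M a"
proof -
  have a: "real a = real (a mod M) + real M * real (a div M)"
    by (metis mod_div_mult_eq of_nat_add of_nat_mult mult.commute add.commute)
  have "2 * pi * real a / real M = 2 * pi * real (a mod M) / real M + 2 * pi * real (a div M)"
    using assms by (simp add: a field_simps)
  then show ?thesis by (simp add: om_def cis_shift_nat)
qed

lemma hull_disc:
  assumes M: "3 \<le> M" and w: "cmod w \<le> cos (pi / real M)"
  shows "w \<in> convex hull (om M ` {..<M})"
proof -
  define H where "H = convex hull (om M ` {..<M})"
  have cH: "convex H" by (simp add: H_def)
  have vert: "om M j \<in> H" for j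
  proof -
    have "om M (j mod M) \<in> om M ` {..<M}" using M by auto
    then show ?thesis using om_mod[of M j] M unfolding H_def by (auto intro: hull_inc)
  qed
  have zero: "0 \<in> H"
  proof -
    have "(\<Sum>j<M. (1 / real M) *\<^sub>R om M j) \<in> H"
      by (rule convex_sum[OF _ cH]) (use M vert in auto)
    moreover have "(\<Sum>j<M. (1 / real M) *\<^sub>R om M j) = 0"
      using root_sum[of M] M by (simp add: scaleR_conv_of_real flip: sum_divide_distrib)
    ultimately show ?thesis by simp
  qed
  show ?thesis
  proof (cases "w = 0")
    case True then show ?thesis using zero by (simp add: H_def)
  next
    case False
    define \<rho> where "\<rho> = cmod w"
    define \<theta> where "\<theta> = Arg w"
    define \<alpha> where "\<alpha> = 2 * pi / real M"
    have \<rho>0: "0 < \<rho>" using False by (simp add: \<rho>_def)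
    have wr: "w = of_real \<rho> * cis \<theta>" using rcis_cmod_Arg[of w] by (simp add: rcis_def \<rho>_def \<theta>_def)
    have \<alpha>0: "0 < \<alpha>" using M by (simp add: \<alpha>_def)
    have \<alpha>pi: "\<alpha> < pi" using M by (simp add: \<alpha>_def field_simps)
    have sa: "0 < sin \<alpha>" using \<alpha>0 \<alpha>pi by (simp add: sin_gt_zero)
    have sa2: "0 < sin (\<alpha>/2)" using \<alpha>0 \<alpha>pi by (simp add: sin_gt_zero)
    have ca2: "0 < cos (\<alpha>/2)" using \<alpha>0 \<alpha>pi by (intro cos_gt_zero) auto
    have ca2': "cos (\<alpha>/2) = cos (pi / real M)" by (simp add: \<alpha>_def)
    define J where "J = \<lfloor>\<theta> / \<alpha>\<rfloor>"
    define \<phi> where "\<phi> = \<theta> - real_of_int J * \<alpha>"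
    have \<phi>0: "0 \<le> \<phi>" and \<phi>1: "\<phi> < \<alpha>"
    proof -
      have "real_of_int J \<le> \<theta> / \<alpha>" "\<theta> / \<alpha> < real_of_int J + 1" unfolding J_def by linarith+
      then show "0 \<le> \<phi>" "\<phi> < \<alpha>" using \<alpha>0 by (simp_all add: \<phi>_def field_simps)
    qed
    define j where "j = nat (J mod int M)"
    have jJ: "real_of_int J = real j + real M * real_of_int (J div int M)"
    proof -
      have "J = J mod int M + int M * (J div int M)" by simp
      moreover have "J mod int M = int j" using M by (simp add: j_def)
      ultimately have "J = int j + int M * (J div int M)" by simp
      then show ?thesis by (metis of_int_add of_int_mult of_int_of_nat_eq of_int_of_nat_eq)
    qed
    have th: "\<theta> = real j * \<alpha> + \<phi> + 2 * pi * real_of_int (J div int M)"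
      using M by (simp add: \<phi>_def jJ \<alpha>_def field_simps)
    have omj: "om M j = cis (real j * \<alpha>)" by (simp add: om_def \<alpha>_def mult.commute)
    have omj1: "om M (Suc j) = cis (real j * \<alpha>) * cis \<alpha>"
      by (simp add: om_def \<alpha>_def cis_mult add_divide_distrib algebra_simps)
    define \<mu>1 where "\<mu>1 = \<rho> * sin (\<alpha> - \<phi>) / sin \<alpha>"
    define \<mu>2 where "\<mu>2 = \<rho> * sin \<phi> / sin \<alpha>"
    have m1: "0 < \<mu>1" using \<rho>0 sa \<phi>0 \<phi>1 \<alpha>pi by (simp add: \<mu>1_def sin_gt_zero)
    have m2: "0 \<le> \<mu>2" using \<rho>0 sa \<phi>0 \<phi>1 \<alpha>pi by (simp add: \<mu>2_def sin_ge_zero)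
    have key: "of_real \<mu>1 + of_real \<mu>2 * cis \<alpha> = of_real \<rho> * cis \<phi>"
    proof (rule complex_eqI)
      show "Re (of_real \<mu>1 + of_real \<mu>2 * cis \<alpha>) = Re (of_real \<rho> * cis \<phi>)"
        using sa by (simp add: \<mu>1_def \<mu>2_def sin_diff field_simps)
      show "Im (of_real \<mu>1 + of_real \<mu>2 * cis \<alpha>) = Im (of_real \<rho> * cis \<phi>)"
        using sa by (simp add: \<mu>2_def field_simps)
    qed
    have wdec: "w = \<mu>1 *\<^sub>R om M j + \<mu>2 *\<^sub>R om M (Suc j)"
    proof -
      have "\<mu>1 *\<^sub>R om M j + \<mu>2 *\<^sub>R om M (Suc j) = cis (real j * \<alpha>) * (of_real \<mu>1 + of_real \<mu>2 * cis \<alpha>)"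
        by (simp add: omj omj1 scaleR_conv_of_real algebra_simps)
      also have "\<dots> = of_real \<rho> * cis (real j * \<alpha> + \<phi>)" by (simp add: key cis_mult[symmetric])
      also have "\<dots> = w" by (simp add: wr th cis_shift_int add.assoc[symmetric])
      finally show ?thesis by simp
    qed
    define s where "s = \<mu>1 + \<mu>2"
    have s0: "0 < s" using m1 m2 by (simp add: s_def)
    have s1: "s \<le> 1"
    proof -
      have "sin (\<alpha> - \<phi>) + sin \<phi> = 2 * sin (\<alpha>/2) * cos ((\<alpha> - 2 * \<phi>) / 2)"
        by (simp add: sin_plus_sin)
      also have "\<dots> \<le> 2 * sin (\<alpha>/2)" using sa2 by simp
      finally have a: "sin (\<alpha> - \<phi>) + sin \<phi> \<le> 2 * sin (\<alpha>/2)" .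
      have sd: "sin \<alpha> = 2 * sin (\<alpha>/2) * cos (\<alpha>/2)"
        using sin_double[of "\<alpha>/2"] by simp
      have "s = \<rho> * (sin (\<alpha> - \<phi>) + sin \<phi>) / sin \<alpha>" by (simp add: s_def \<mu>1_def \<mu>2_def add_divide_distrib distrib_left)
      also have "\<dots> \<le> \<rho> * (2 * sin (\<alpha>/2)) / sin \<alpha>"
        using a \<rho>0 sa by (simp add: divide_right_mono)
      also have "\<dots> = \<rho> / cos (\<alpha>/2)" using sa2 ca2 by (simp add: sd)
      also have "\<dots> \<le> 1" using w ca2 ca2' by (simp add: \<rho>_def)
      finally show ?thesis .
    qed
    have x1: "(\<mu>1 / s) *\<^sub>R om M j + (\<mu>2 / s) *\<^sub>R om M (Suc j) \<in> H"
      by (rule convexD[OF cH vert vert]) (use s0 m1 m2 in \<open>auto simp: s_def add_divide_distrib[symmetric]\<close>)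
    have "s *\<^sub>R ((\<mu>1 / s) *\<^sub>R om M j + (\<mu>2 / s) *\<^sub>R om M (Suc j)) + (1 - s) *\<^sub>R 0 \<in> H"
      by (rule convexD[OF cH x1 zero]) (use s0 s1 in auto)
    moreover have "s *\<^sub>R ((\<mu>1 / s) *\<^sub>R om M j + (\<mu>2 / s) *\<^sub>R om M (Suc j)) + (1 - s) *\<^sub>R 0 = w"
      using s0 by (simp add: wdec scaleR_add_right)
    ultimately show ?thesis by (simp add: H_def)
  qed
qed



lemma mod_add_cancel_nat:
  fixes a b c M :: nat
  assumes "a < M" "b < M" "(a + c) mod M = (b + c) mod M"
  shows "a = b"
proof -
  have "(int a + int c) mod int M = (int b + int c) mod int M"
    using assms(3) by (metis of_nat_add of_nat_mod)
  then have "((int a + int c) mod int M - int c) mod int M = ((int b + int c) mod int M - int c) mod int M" by simp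
  then have "int a mod int M = int b mod int M" by (simp add: mod_diff_left_eq)
  then show ?thesis using assms(1,2) by simp
qed

definition Pm :: "nat \<Rightarrow> nat \<Rightarrow> nat \<Rightarrow> (nat list \<Rightarrow> complex) \<Rightarrow> (nat \<times> nat \<Rightarrow> nat) \<Rightarrow> (nat \<Rightarrow> nat \<Rightarrow> complex) \<Rightarrow> complex" where
  "Pm M m N a t y = (\<Sum>ns\<in>idx m N. a ns * (\<Prod>k<m. om M (t (k, ns ! k)) * y k (ns ! k)))"

definition upd :: "(nat \<Rightarrow> nat \<Rightarrow> complex) \<Rightarrow> nat \<Rightarrow> nat \<Rightarrow> complex \<Rightarrow> (nat \<Rightarrow> nat \<Rightarrow> complex)" where
  "upd y k0 n0 z = y(k0 := (y k0)(n0 := z))"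

lemma prod_affine:
  fixes h :: "nat \<Rightarrow> complex \<Rightarrow> complex"
  assumes "finite K" "k0 \<in> K" "\<And>k z. k \<in> K - {k0} \<Longrightarrow> h k z = h k 0"
    "\<And>z. h k0 z = h k0 0 + z * (h k0 1 - h k0 0)"
  shows "(\<Prod>k\<in>K. h k z) = (\<Prod>k\<in>K. h k 0) + z * ((\<Prod>k\<in>K. h k 1) - (\<Prod>k\<in>K. h k 0))"
proof -
  define R where "R = (\<Prod>k\<in>K - {k0}. h k 0)"
  have r: "(\<Prod>k\<in>K. h k w) = h k0 w * R" for w
  proof -
    have "(\<Prod>k\<in>K. h k w) = h k0 w * (\<Prod>k\<in>K - {k0}. h k w)" by (rule prod.remove[OF assms(1,2)])
    also have "(\<Prod>k\<in>K - {k0}. h k w) = R" unfolding R_def by (rule prod.cong[OF refl]) (rule assms(3))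
    finally show ?thesis .
  qed
  show ?thesis unfolding r by (subst assms(4)[of z]) (simp add: algebra_simps)
qed

lemma Pm_affine:
  assumes "k0 < m"
  shows "Pm M m N a t (upd y k0 n0 z) = Pm M m N a t (upd y k0 n0 0)
     + z * (Pm M m N a t (upd y k0 n0 1) - Pm M m N a t (upd y k0 n0 0))"
proof -
  define A where "A ns = (\<Prod>k<m. om M (t (k, ns ! k)) * upd y k0 n0 0 k (ns ! k))" for ns
  define B where "B ns = (\<Prod>k<m. om M (t (k, ns ! k)) * upd y k0 n0 1 k (ns ! k))" for ns
  have mono: "(\<Prod>k<m. om M (t (k, ns ! k)) * upd y k0 n0 z k (ns ! k)) = A ns + z * (B ns - A ns)" for ns
    unfolding A_def B_def
  proof (rule prod_affine[where h="\<lambda>k z. om M (t (k, ns ! k)) * upd y k0 n0 z k (ns ! k)"])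
    show "finite {..<m}" by simp
    show "k0 \<in> {..<m}" using assms by simp
    show "om M (t (k, ns ! k)) * upd y k0 n0 z k (ns ! k) = om M (t (k, ns ! k)) * upd y k0 n0 0 k (ns ! k)"
      if "k \<in> {..<m} - {k0}" for k z using that by (simp add: upd_def)
    show "om M (t (k0, ns ! k0)) * upd y k0 n0 z k0 (ns ! k0) = om M (t (k0, ns ! k0)) * upd y k0 n0 0 k0 (ns ! k0) +
         z * (om M (t (k0, ns ! k0)) * upd y k0 n0 1 k0 (ns ! k0) - om M (t (k0, ns ! k0)) * upd y k0 n0 0 k0 (ns ! k0))" for z
      by (cases "ns ! k0 = n0") (simp_all add: upd_def)
  qed
  have e: "Pm M m N a t (upd y k0 n0 z) = (\<Sum>ns\<in>idx m N. a ns * (A ns + z * (B ns - A ns)))"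
    unfolding Pm_def mono ..
  have e0: "Pm M m N a t (upd y k0 n0 0) = (\<Sum>ns\<in>idx m N. a ns * A ns)"
    unfolding Pm_def A_def ..
  have e1: "Pm M m N a t (upd y k0 n0 1) = (\<Sum>ns\<in>idx m N. a ns * B ns)"
    unfolding Pm_def B_def ..
  show ?thesis unfolding e e0 e1
    by (simp add: sum.distrib sum_subtractf sum_distrib_left algebra_simps)
qed

lemma powr_convex0:
  fixes A B u p :: real
  assumes p: "1 \<le> p" and A: "0 \<le> A" and B: "0 \<le> B" and u: "0 \<le> u" "u \<le> 1"
  shows "((1 - u) * A + u * B) powr p \<le> (1 - u) * A powr p + u * B powr p"
proof -
  have pw: "v powr p * C powr p \<le> v * C powr p" if "0 \<le> v" "v \<le> 1" for v C :: real
  proof -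
    have "v powr p \<le> v powr 1" using powr_mono'[of 1 p v] that p by simp
    then have "v powr p \<le> v" using that by simp
    then show ?thesis by (simp add: mult_right_mono)
  qed
  have p0: "p \<noteq> 0" using p by simp
  consider "A = 0" | "B = 0" | "0 < A" "0 < B" using A B by linarith
  then show ?thesis
  proof cases
    case 1 then show ?thesis using pw[of u B] u p0 by (simp add: powr_mult)
  next
    case 2 then show ?thesis using pw[of "1 - u" A] u p0 by (simp add: powr_mult)
  next
    case 3
    show ?thesis using convex_onD[OF powr_convex[OF p], of u A B] 3 u by simp
  qed
qed

lemma convex_Q:
  assumes p: "1 \<le> p"
  shows "convex_on UNIV (\<lambda>z. \<Sum>t\<in>TT. cmod (\<alpha> t + z * \<beta> t) powr p)"
proof (rule convex_onI)
  fix u :: real and x y :: complex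
  assume u: "0 < u" "u < 1"
  have trm: "cmod (\<alpha> t + ((1 - u) *\<^sub>R x + u *\<^sub>R y) * \<beta> t) powr p
      \<le> (1 - u) * cmod (\<alpha> t + x * \<beta> t) powr p + u * cmod (\<alpha> t + y * \<beta> t) powr p" for t
  proof -
    have eq: "\<alpha> t + ((1 - u) *\<^sub>R x + u *\<^sub>R y) * \<beta> t = (1 - u) *\<^sub>R (\<alpha> t + x * \<beta> t) + u *\<^sub>R (\<alpha> t + y * \<beta> t)"
      by (simp add: scaleR_conv_of_real algebra_simps)
    have "cmod (\<alpha> t + ((1 - u) *\<^sub>R x + u *\<^sub>R y) * \<beta> t) \<le> (1 - u) * cmod (\<alpha> t + x * \<beta> t) + u * cmod (\<alpha> t + y * \<beta> t)"
      unfolding eq using u by (metis (no_types, lifting) abs_of_nonneg diff_ge_0_iff_ge less_eq_real_def norm_scaleR norm_triangle_ineq)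
    then have "cmod (\<alpha> t + ((1 - u) *\<^sub>R x + u *\<^sub>R y) * \<beta> t) powr p \<le> ((1 - u) * cmod (\<alpha> t + x * \<beta> t) + u * cmod (\<alpha> t + y * \<beta> t)) powr p"
      using p by (intro powr_mono2) auto
    also have "\<dots> \<le> (1 - u) * cmod (\<alpha> t + x * \<beta> t) powr p + u * cmod (\<alpha> t + y * \<beta> t) powr p"
      by (rule powr_convex0) (use p u in auto)
    finally show ?thesis .
  qed
  show "(\<Sum>t\<in>TT. cmod (\<alpha> t + ((1 - u) *\<^sub>R x + u *\<^sub>R y) * \<beta> t) powr p)
     \<le> (1 - u) * (\<Sum>t\<in>TT. cmod (\<alpha> t + x * \<beta> t) powr p) + u * (\<Sum>t\<in>TT. cmod (\<alpha> t + y * \<beta> t) powr p)"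
    by (simp add: sum_distrib_left sum.distrib[symmetric] sum_mono trm)
qed simp



definition shift :: "nat \<Rightarrow> nat \<Rightarrow> nat \<Rightarrow> (nat \<times> nat \<Rightarrow> nat) \<Rightarrow> (nat \<times> nat \<Rightarrow> nat) \<Rightarrow> (nat \<times> nat \<Rightarrow> nat)" where
  "shift M m N s t = (\<lambda>x. if x \<in> {..<m} \<times> {..<N} then (t x + s x) mod M else undefined)"

lemma idx_nth_lt: "ns \<in> idx m N \<Longrightarrow> k < m \<Longrightarrow> ns ! k < N"
proof -
  assume a: "ns \<in> idx m N" "k < m"
  then have "ns ! k \<in> set ns" by (simp add: idx_def)
  moreover have "set ns \<subseteq> {..<N}" using a by (simp add: idx_def)
  ultimately have "ns ! k \<in> {..<N}" by blast
  then show "ns ! k < N" by simp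
qed

lemma Fm_om: "Fm M m N a t = (\<Sum>ns\<in>idx m N. a ns * (\<Prod>k<m. om M (t (k, ns ! k))))"
  by (simp add: Fm_def om_def)

lemma Pm_shift:
  assumes M: "0 < M" and y: "\<And>k n. k < m \<Longrightarrow> n < N \<Longrightarrow> y k n = om M (s (k, n))"
  shows "Pm M m N a t y = Fm M m N a (shift M m N s t)"
  unfolding Pm_def Fm_om
proof (intro sum.cong refl arg_cong[where f="\<lambda>x. _ * x"] prod.cong)
  fix ns k assume ns: "ns \<in> idx m N" and k: "k \<in> {..<m}"
  have lt: "ns ! k < N" using idx_nth_lt[OF ns] k by simp
  have "om M (t (k, ns ! k)) * y k (ns ! k) = om M (t (k, ns ! k) + s (k, ns ! k))"
    using y[of k "ns ! k"] k lt by (simp add: om_mult)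
  also have "\<dots> = om M (shift M m N s t (k, ns ! k))"
    using k lt M by (simp add: shift_def om_mod)
  finally show "om M (t (k, ns ! k)) * y k (ns ! k) = om M (shift M m N s t (k, ns ! k))" .
qed

lemma shift_bij:
  assumes M: "0 < M"
  shows "inj_on (shift M m N s) (Tset M m N)" "shift M m N s ` Tset M m N = Tset M m N"
proof -
  show inj: "inj_on (shift M m N s) (Tset M m N)"
  proof (rule inj_onI)
    fix t1 t2 assume t1: "t1 \<in> Tset M m N" and t2: "t2 \<in> Tset M m N" and e: "shift M m N s t1 = shift M m N s t2"
    show "t1 = t2"
    proof
      fix x show "t1 x = t2 x"
      proof (cases "x \<in> {..<m} \<times> {..<N}")
        case True
        have "(t1 x + s x) mod M = (t2 x + s x) mod M" using e True by (metis shift_def)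
        moreover have "t1 x < M" "t2 x < M" using t1 t2 True by (auto simp: Tset_def PiE_iff)
        ultimately show ?thesis using mod_add_cancel_nat by blast
      next
        case False
        then show ?thesis using t1 t2 by (cases x) (auto simp: Tset_def PiE_def extensional_def)
      qed
    qed
  qed
  have "shift M m N s ` Tset M m N \<subseteq> Tset M m N"
    using M by (auto simp: shift_def Tset_def PiE_iff extensional_def)
  then show "shift M m N s ` Tset M m N = Tset M m N"
    using inj by (intro endo_inj_surj) auto
qed

lemma Q_vertex:
  assumes M: "0 < M" and y: "\<And>k n. k < m \<Longrightarrow> n < N \<Longrightarrow> y k n = om M (s (k, n))"
  shows "(\<Sum>t\<in>Tset M m N. cmod (Pm M m N a t y) powr p) = (\<Sum>t\<in>Tset M m N. cmod (Fm M m N a t) powr p)"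
proof -
  have "(\<Sum>t\<in>Tset M m N. cmod (Pm M m N a t y) powr p) = (\<Sum>t\<in>Tset M m N. cmod (Fm M m N a (shift M m N s t)) powr p)"
  proof (rule sum.cong[OF refl])
    fix t show "cmod (Pm M m N a t y) powr p = cmod (Fm M m N a (shift M m N s t)) powr p"
      by (subst Pm_shift[OF M]) (simp_all add: y)
  qed
  also have "\<dots> = (\<Sum>t\<in>shift M m N s ` Tset M m N. cmod (Fm M m N a t) powr p)"
    by (rule sum.reindex[OF shift_bij(1)[OF M], unfolded comp_def, symmetric])
  also have "\<dots> = (\<Sum>t\<in>Tset M m N. cmod (Fm M m N a t) powr p)"
    by (simp add: shift_bij(2)[OF M])
  finally show ?thesis .
qed

lemma upd_apply: "upd y k0 n0 z k n = (if k = k0 \<and> n = n0 then z else y k n)"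
  by (simp add: upd_def)

lemma upd_triv: "upd y k0 n0 (y k0 n0) = y"
  by (simp add: upd_def)

lemma vertex_ind:
  assumes M: "2 \<le> M" and p: "1 \<le> p" and D: "finite D" "D \<subseteq> {..<m} \<times> {..<N}"
  shows "\<forall>y. (\<forall>k<m. \<forall>n<N. y k n \<in> convex hull (om M ` {..<M})) \<and>
             (\<forall>k<m. \<forall>n<N. (k, n) \<notin> D \<longrightarrow> y k n \<in> om M ` {..<M}) \<longrightarrow>
           (\<Sum>t\<in>Tset M m N. cmod (Pm M m N a t y) powr p) \<le> (\<Sum>t\<in>Tset M m N. cmod (Fm M m N a t) powr p)"
  using D
proof (induction D rule: finite_induct)
  case empty
  show ?case
  proof (intro allI impI)
    fix y assume h: "(\<forall>k<m. \<forall>n<N. y k n \<in> convex hull (om M ` {..<M})) \<and>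
             (\<forall>k<m. \<forall>n<N. (k, n) \<notin> {} \<longrightarrow> y k n \<in> om M ` {..<M})"
    define s where "s x = (if x \<in> {..<m} \<times> {..<N} then (SOME j. j < M \<and> y (fst x) (snd x) = om M j) else undefined)" for x
    have s: "s (k, n) < M \<and> y k n = om M (s (k, n))" if "k < m" "n < N" for k n
    proof -
      have "y k n \<in> om M ` {..<M}" using h that by blast
      then have "\<exists>j. j < M \<and> y k n = om M j" by auto
      then have "(SOME j. j < M \<and> y k n = om M j) < M \<and> y k n = om M (SOME j. j < M \<and> y k n = om M j)"
        by (rule someI_ex)
      then show ?thesis using that by (simp add: s_def)
    qed
    have "(\<Sum>t\<in>Tset M m N. cmod (Pm M m N a t y) powr p) = (\<Sum>t\<in>Tset M m N. cmod (Fm M m N a t) powr p)"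
      by (rule Q_vertex[where s=s]) (use M s in auto)
    then show "(\<Sum>t\<in>Tset M m N. cmod (Pm M m N a t y) powr p) \<le> (\<Sum>t\<in>Tset M m N. cmod (Fm M m N a t) powr p)"
      by simp
  qed
next
  case (insert d F)
  obtain k0 n0 where d: "d = (k0, n0)" by (cases d)
  have k0: "k0 < m" and n0: "n0 < N" using insert.prems d by auto
  have IH: "\<And>y. (\<forall>k<m. \<forall>n<N. y k n \<in> convex hull (om M ` {..<M})) \<and>
             (\<forall>k<m. \<forall>n<N. (k, n) \<notin> F \<longrightarrow> y k n \<in> om M ` {..<M}) \<Longrightarrow>
           (\<Sum>t\<in>Tset M m N. cmod (Pm M m N a t y) powr p) \<le> (\<Sum>t\<in>Tset M m N. cmod (Fm M m N a t) powr p)"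
    using insert.IH insert.prems by blast
  show ?case
  proof (intro allI impI)
    fix y assume h: "(\<forall>k<m. \<forall>n<N. y k n \<in> convex hull (om M ` {..<M})) \<and>
             (\<forall>k<m. \<forall>n<N. (k, n) \<notin> insert d F \<longrightarrow> y k n \<in> om M ` {..<M})"
    define B where "B = (\<Sum>t\<in>Tset M m N. cmod (Fm M m N a t) powr p)"
    define \<alpha> where "\<alpha> t = Pm M m N a t (upd y k0 n0 0)" for t
    define \<beta> where "\<beta> t = Pm M m N a t (upd y k0 n0 1) - Pm M m N a t (upd y k0 n0 0)" for t
    define g where "g z = (\<Sum>t\<in>Tset M m N. cmod (\<alpha> t + z * \<beta> t) powr p)" for z
    have gq: "g z = (\<Sum>t\<in>Tset M m N. cmod (Pm M m N a t (upd y k0 n0 z)) powr p)" for z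
    proof -
      have "\<alpha> t + z * \<beta> t = Pm M m N a t (upd y k0 n0 z)" for t
        unfolding \<alpha>_def \<beta>_def by (rule Pm_affine[OF k0, symmetric])
      then show ?thesis unfolding g_def by simp
    qed
    have cg: "convex_on (convex hull (om M ` {..<M})) g"
      unfolding g_def by (rule convex_on_subset[OF convex_Q[OF p]]) auto
    have vb: "\<forall>v\<in>om M ` {..<M}. g v \<le> B"
    proof
      fix v assume v: "v \<in> om M ` {..<M}"
      show "g v \<le> B" unfolding gq B_def
      proof (rule IH, intro conjI allI impI)
        fix k n assume "k < m" "n < N"
        then show "upd y k0 n0 v k n \<in> convex hull (om M ` {..<M})"
          using h v by (auto simp: upd_apply intro: hull_inc)
      next
        fix k n assume "k < m" "n < N" "(k, n) \<notin> F"
        then show "upd y k0 n0 v k n \<in> om M ` {..<M}"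
          using h v d by (auto simp: upd_apply)
      qed
    qed
    have "g (y k0 n0) \<le> B"
      using convex_on_convex_hull_bound[OF cg vb] h k0 n0 by blast
    then show "(\<Sum>t\<in>Tset M m N. cmod (Pm M m N a t y) powr p) \<le> (\<Sum>t\<in>Tset M m N. cmod (Fm M m N a t) powr p)"
      by (simp add: gq upd_triv B_def)
  qed
qed

lemma Pm_scale: "Pm M m N a t (\<lambda>k n. c * x k n) = c ^ m * Pm M m N a t x"
proof -
  have "(\<Prod>k<m. om M (t (k, ns ! k)) * (c * x k (ns ! k))) = c ^ m * (\<Prod>k<m. om M (t (k, ns ! k)) * x k (ns ! k))" for ns
  proof -
    have "(\<Prod>k<m. om M (t (k, ns ! k)) * (c * x k (ns ! k))) = (\<Prod>k<m. c * (om M (t (k, ns ! k)) * x k (ns ! k)))"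
      by (simp add: algebra_simps)
    also have "\<dots> = c ^ m * (\<Prod>k<m. om M (t (k, ns ! k)) * x k (ns ! k))"
      by (simp add: prod.distrib)
    finally show ?thesis .
  qed
  then show ?thesis by (simp add: Pm_def sum_distrib_left algebra_simps)
qed

lemma core:
  assumes M: "3 \<le> M" and p: "1 \<le> p" and x: "\<And>k n. k < m \<Longrightarrow> n < N \<Longrightarrow> cmod (x k n) \<le> 1"
  shows "(\<Sum>t\<in>Tset M m N. cmod (Pm M m N a t x) powr p)
     \<le> (r_M M powr (- real m)) powr p * (\<Sum>t\<in>Tset M m N. cmod (Fm M m N a t) powr p)"
proof -
  define r where "r = r_M M"
  have r: "r = cos (pi / real M)" using M by (simp add: r_def rM_eq)
  have r0: "0 < r" unfolding r using M by (intro cos_gt_zero) (auto simp: field_simps)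
  define y where "y k n = of_real r * x k n" for k n
  define B where "B = (\<Sum>t\<in>Tset M m N. cmod (Fm M m N a t) powr p)"
  have M2: "2 \<le> M" using M by simp
  have hy: "\<forall>k<m. \<forall>n<N. y k n \<in> convex hull (om M ` {..<M})"
  proof (intro allI impI)
    fix k n assume "k < m" "n < N"
    then have "cmod (y k n) \<le> r" using x[of k n] r0 by (simp add: y_def norm_mult mult_left_le)
    then show "y k n \<in> convex hull (om M ` {..<M})" using hull_disc[OF M] r by simp
  qed
  have hy2: "\<forall>k<m. \<forall>n<N. (k, n) \<notin> {..<m} \<times> {..<N} \<longrightarrow> y k n \<in> om M ` {..<M}" by auto
  have "(\<Sum>t\<in>Tset M m N. cmod (Pm M m N a t y) powr p) \<le> B"
    unfolding B_def using vertex_ind[OF M2 p, of "{..<m} \<times> {..<N}" m N a] hy hy2 by blast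
  moreover have "(\<Sum>t\<in>Tset M m N. cmod (Pm M m N a t y) powr p) = (r ^ m) powr p * (\<Sum>t\<in>Tset M m N. cmod (Pm M m N a t x) powr p)"
  proof -
    have e: "Pm M m N a t y = (of_real r)^m * Pm M m N a t x" for t unfolding y_def by (rule Pm_scale)
    show ?thesis using r0 by (simp add: e norm_mult norm_power powr_mult sum_distrib_left)
  qed
  ultimately have h: "(r ^ m) powr p * (\<Sum>t\<in>Tset M m N. cmod (Pm M m N a t x) powr p) \<le> B" by simp
  have one: "(r powr (- real m)) powr p * (r ^ m) powr p = 1"
  proof -
    have "r powr (- real m) * r ^ m = 1" using r0 by (simp add: powr_minus powr_realpow)
    then have "(r powr (- real m) * r ^ m) powr p = 1" by simp
    then show ?thesis by (simp add: powr_mult)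
  qed
  have "(\<Sum>t\<in>Tset M m N. cmod (Pm M m N a t x) powr p) = (r powr (- real m)) powr p * ((r ^ m) powr p * (\<Sum>t\<in>Tset M m N. cmod (Pm M m N a t x) powr p))"
    using one by (simp add: mult.assoc[symmetric])
  also have "\<dots> \<le> (r powr (- real m)) powr p * B"
    using h by (simp add: mult_left_mono)
  finally show ?thesis by (simp add: r_def B_def)
qed



definition Tform :: "nat \<Rightarrow> nat \<Rightarrow> nat \<Rightarrow> (nat list \<Rightarrow> complex) \<Rightarrow> real \<Rightarrow> nat \<Rightarrow> (nat \<Rightarrow> nat \<times> nat \<Rightarrow> nat)
    \<Rightarrow> (nat \<Rightarrow> nat \<Rightarrow> complex) \<Rightarrow> complex" where
  "Tform M m N a p K e x = (\<Sum>j<K. x 0 j * (of_real (((1 / real M) ^ (N * m)) powr (1 / p)) * Pm M m N a (e j) (\<lambda>k. x (Suc k))))"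

lemma prod_linear:
  fixes h1 h2 h3 :: "nat \<Rightarrow> complex"
  assumes "finite K" "kk \<in> K" "\<And>k. k \<in> K - {kk} \<Longrightarrow> h1 k = h3 k" "\<And>k. k \<in> K - {kk} \<Longrightarrow> h2 k = h3 k"
    "h3 kk = c * h1 kk + h2 kk"
  shows "(\<Prod>k\<in>K. h3 k) = c * (\<Prod>k\<in>K. h1 k) + (\<Prod>k\<in>K. h2 k)"
proof -
  define R where "R = (\<Prod>k\<in>K - {kk}. h3 k)"
  have q1: "(\<Prod>k\<in>K - {kk}. h1 k) = R" unfolding R_def by (rule prod.cong[OF refl]) (rule assms(3))
  have q2: "(\<Prod>k\<in>K - {kk}. h2 k) = R" unfolding R_def by (rule prod.cong[OF refl]) (rule assms(4))
  have r1: "(\<Prod>k\<in>K. h1 k) = h1 kk * R"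
    unfolding prod.remove[OF assms(1,2)] q1 ..
  have r2: "(\<Prod>k\<in>K. h2 k) = h2 kk * R"
    unfolding prod.remove[OF assms(1,2)] q2 ..
  have r3: "(\<Prod>k\<in>K. h3 k) = h3 kk * R"
    unfolding R_def prod.remove[OF assms(1,2)] by simp
  show ?thesis unfolding r1 r2 r3 assms(5) by (simp add: algebra_simps)
qed

lemma Pm_lin:
  assumes "k1 < m"
  shows "Pm M m N a t (Y(k1 := (\<lambda>i. c * u i + v i))) = c * Pm M m N a t (Y(k1 := u)) + Pm M m N a t (Y(k1 := v))"
proof -
  have "(\<Prod>k<m. om M (t (k, ns ! k)) * (Y(k1 := (\<lambda>i. c * u i + v i))) k (ns ! k))
      = c * (\<Prod>k<m. om M (t (k, ns ! k)) * (Y(k1 := u)) k (ns ! k)) + (\<Prod>k<m. om M (t (k, ns ! k)) * (Y(k1 := v)) k (ns ! k))"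
    for ns
    by (rule prod_linear[where kk=k1]) (use assms in \<open>auto simp: algebra_simps\<close>)
  then show ?thesis unfolding Pm_def by (simp add: sum.distrib sum_distrib_left algebra_simps)
qed

lemma Tform_multilinear: "multilinear_form m p (Tform M m N a p K e)"
  unfolding multilinear_form_def
proof (intro allI impI)
  fix x :: "nat \<Rightarrow> nat \<Rightarrow> complex" and k :: nat and y z :: "nat \<Rightarrow> complex" and c :: complex
  assume k: "k \<le> m"
  show "Tform M m N a p K e (x(k := (\<lambda>i. c * y i + z i))) = c * Tform M m N a p K e (x(k := y)) + Tform M m N a p K e (x(k := z))"
  proof (cases k)
    case 0
    have s: "(\<lambda>k'. (x(0 := v)) (Suc k')) = (\<lambda>k'. x (Suc k'))" for v by auto
    show ?thesis using 0 unfolding Tform_def s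
      by (simp add: sum.distrib sum_distrib_left algebra_simps)
  next
    case (Suc k1)
    then have k1: "k1 < m" using k by simp
    have s: "(\<lambda>k'. (x(Suc k1 := v)) (Suc k')) = (\<lambda>k'. x (Suc k'))(k1 := v)" for v by auto
    have s0: "(x(Suc k1 := v)) 0 = x 0" for v by simp
    show ?thesis unfolding Suc Tform_def s s0 Pm_lin[OF k1]
      by (simp add: sum.distrib sum_distrib_left algebra_simps del: fun_upd_apply)
  qed
qed

lemma prod_unitvec:
  assumes "ns \<in> idx m N" "length is = m"
  shows "(\<Prod>k<m. om M (t (k, ns ! k)) * unitvec (is ! k) (ns ! k)) = (if ns = is then (\<Prod>k<m. om M (t (k, is ! k))) else 0)"
proof (cases "ns = is")
  case True then show ?thesis by (simp add: unitvec_def)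
next
  case False
  have l: "length ns = m" using assms by (simp add: idx_def)
  then obtain k where k: "k < m" "ns ! k \<noteq> is ! k" using False assms(2) by (metis nth_equalityI)
  then have "om M (t (k, ns ! k)) * unitvec (is ! k) (ns ! k) = 0" by (simp add: unitvec_def)
  then have "(\<Prod>k<m. om M (t (k, ns ! k)) * unitvec (is ! k) (ns ! k)) = 0"
    using k by (intro prod_zero) auto
  then show ?thesis using False by simp
qed

lemma coef_Tform:
  assumes l: "length is = m"
  shows "coef m (Tform M m N a p K e) j is =
    (if j < K \<and> is \<in> idx m N then of_real (((1 / real M) ^ (N * m)) powr (1 / p)) * (a is * (\<Prod>k<m. om M (e j (k, is ! k)))) else 0)"
proof -
  define X where "X = (\<lambda>k. if k = 0 then unitvec j else if k \<le> m then unitvec (is ! (k - 1)) else (\<lambda>_. 0))"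
  have X0: "X 0 = unitvec j" by (simp add: X_def)
  have XS: "(\<lambda>k. X (Suc k)) = (\<lambda>k. if k < m then unitvec (is ! k) else (\<lambda>_. 0))"
    by (auto simp: X_def)
  have Pm_u: "Pm M m N a t (\<lambda>k. X (Suc k)) = (if is \<in> idx m N then a is * (\<Prod>k<m. om M (t (k, is ! k))) else 0)" for t
  proof -
    have "Pm M m N a t (\<lambda>k. X (Suc k)) = (\<Sum>ns\<in>idx m N. a ns * (\<Prod>k<m. om M (t (k, ns ! k)) * unitvec (is ! k) (ns ! k)))"
      unfolding Pm_def XS by simp
    also have "\<dots> = (\<Sum>ns\<in>idx m N. if ns = is then a is * (\<Prod>k<m. om M (t (k, is ! k))) else 0)"
      by (rule sum.cong) (simp_all add: prod_unitvec[OF _ l])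
    also have "\<dots> = (if is \<in> idx m N then a is * (\<Prod>k<m. om M (t (k, is ! k))) else 0)"
      by (simp add: sum.delta')
    finally show ?thesis .
  qed
  have "coef m (Tform M m N a p K e) j is = Tform M m N a p K e X"
    by (simp add: coef_def X_def)
  also have "\<dots> = (\<Sum>j'<K. unitvec j j' * (of_real (((1 / real M) ^ (N * m)) powr (1 / p)) * Pm M m N a (e j') (\<lambda>k. X (Suc k))))"
    by (simp add: Tform_def X0)
  also have "\<dots> = (if j < K then of_real (((1 / real M) ^ (N * m)) powr (1 / p)) * Pm M m N a (e j) (\<lambda>k. X (Suc k)) else 0)"
  proof -
    have i: "(if P then 1 else 0) * (u::complex) = (if P then u else 0)" for P u by simp
    show ?thesis unfolding unitvec_def i by (simp add: sum.delta')
  qed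
  finally show ?thesis by (simp add: Pm_u)
qed



lemma c0_bound:
  assumes "c0_mem x" shows "cmod (x i) \<le> sup_norm x"
proof -
  have "convergent x" using assms by (auto simp: c0_mem_def convergent_def)
  then have "Bseq x" by (rule convergent_imp_Bseq)
  then obtain B where "\<And>n. norm (x n) \<le> B" by (auto simp: Bseq_def)
  then have "bdd_above (range (\<lambda>i. cmod (x i)))" by (intro bdd_aboveI) auto
  then show ?thesis unfolding sup_norm_def using cSUP_upper[of i UNIV "\<lambda>i. cmod (x i)"] by simp
qed

lemma zero_in_ball: "in_ball m p (\<lambda>k i. 0)"
proof -
  have sn: "sup_norm (\<lambda>i. 0) = 0" by (simp add: sup_norm_def)
  have c0: "c0_mem (\<lambda>i. 0)" by (simp add: c0_mem_def)
  show ?thesis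
    by (simp add: in_ball_def in_dom_def X_mem_def X_norm_def sn c0)
qed

lemma Tform_bound:
  assumes M: "3 \<le> M" and p: "1 \<le> p" and e: "bij_betw e {0..<K} (Tset M m N)" and x: "in_ball m p x"
  shows "cmod (Tform M m N a p K e x) \<le> r_M M powr (- real m) * E_MMp m M p N a"
proof -
  define Y where "Y k = x (Suc k)" for k
  have hY: "cmod (Y k n) \<le> 1" if "k < m" "n < N" for k n
  proof -
    have "Suc k \<in> {1..m}" using that by simp
    then have "c0_mem (x (Suc k))" "sup_norm (x (Suc k)) \<le> 1" using x by (auto simp: in_ball_def in_dom_def)
    then show ?thesis using c0_bound[of "x (Suc k)" n] by (simp add: Y_def)
  qed
  define cw where "cw = (1 / real M) ^ (N * m)"
  define w where "w = cw powr (1 / p)"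
  define R where "R = r_M M powr (- real m)"
  define Bf where "Bf = (\<Sum>t\<in>Tset M m N. cmod (Fm M m N a t) powr p)"
  define P where "P j = Pm M m N a (e j) Y" for j
  have cw0: "0 \<le> cw" by (simp add: cw_def)
  have w0: "0 \<le> w" by (simp add: w_def)
  have R0: "0 \<le> R" by (simp add: R_def)
  have Bf0: "0 \<le> Bf" by (simp add: Bf_def sum_nonneg)
  have E: "E_MMp m M p N a = (cw * Bf) powr (1 / p)" by (simp add: E_MMp_alt cw_def Bf_def)
  have core': "(\<Sum>t\<in>Tset M m N. cmod (Pm M m N a t Y) powr p) \<le> R powr p * Bf"
    unfolding R_def Bf_def by (rule core[OF M p hY])
  have reidx: "(\<Sum>j<K. g (e j)) = (\<Sum>t\<in>Tset M m N. g t)" for g :: "_ \<Rightarrow> real"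
    unfolding lessThan_atLeast0 by (rule sum.reindex_bij_betw[OF e])
  have "cmod (Tform M m N a p K e x) \<le> (\<Sum>j<K. cmod (x 0 j * (of_real w * P j)))"
    unfolding Tform_def P_def Y_def w_def cw_def by (rule norm_sum)
  also have "\<dots> = (\<Sum>j<K. (w * cmod (P j)) * cmod (x 0 j))"
    using w0 by (simp add: norm_mult algebra_simps)
  finally have st: "cmod (Tform M m N a p K e x) \<le> (\<Sum>j<K. (w * cmod (P j)) * cmod (x 0 j))" .
  show ?thesis
  proof (cases "p = 1")
    case True
    have "c0_mem (x 0)" "sup_norm (x 0) \<le> 1" using x True by (auto simp: in_ball_def in_dom_def X_mem_def X_norm_def)
    then have x0: "cmod (x 0 j) \<le> 1" for j using c0_bound[of "x 0" j] by simp
    have "(\<Sum>j<K. (w * cmod (P j)) * cmod (x 0 j)) \<le> (\<Sum>j<K. w * cmod (P j))"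
      by (rule sum_mono) (use x0 w0 in \<open>simp add: mult_left_le\<close>)
    also have "\<dots> = w * (\<Sum>t\<in>Tset M m N. cmod (Pm M m N a t Y))"
      unfolding P_def sum_distrib_left[symmetric] using reidx[of "\<lambda>t. cmod (Pm M m N a t Y)"] by simp
    also have "\<dots> \<le> w * (R * Bf)"
      using core' True R0 w0 by (simp add: mult_left_mono)
    also have "\<dots> = R * E_MMp m M p N a"
    proof -
      have "E_MMp m M p N a = cw * Bf" using E True cw0 Bf0 by simp
      then show ?thesis using True cw0 by (simp add: w_def)
    qed
    finally show ?thesis using st by (simp add: R_def)
  next
    case False
    then have p1: "1 < p" using p by simp
    define q where "q = conj_exp p"
    have q1: "1 < q" using p1 by (simp add: q_def conj_exp_def)
    have pq: "1 / p + 1 / q = 1" using p1 by (simp add: q_def conj_exp_def field_simps)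
    have sm: "summable (\<lambda>i. cmod (x 0 i) powr q)" and xn: "(\<Sum>i. cmod (x 0 i) powr q) powr (1 / q) \<le> 1"
      using x False by (auto simp: in_ball_def in_dom_def X_mem_def X_norm_def q_def)
    have h: "(\<Sum>j<K. (w * cmod (P j)) * cmod (x 0 j))
        \<le> (\<Sum>j<K. (w * cmod (P j)) powr p) powr (1 / p) * (\<Sum>j<K. cmod (x 0 j) powr q) powr (1 / q)"
      by (rule holder_fin) (use p1 q1 pq w0 in auto)
    have h2: "(\<Sum>j<K. cmod (x 0 j) powr q) powr (1 / q) \<le> 1"
    proof -
      have "(\<Sum>j<K. cmod (x 0 j) powr q) \<le> (\<Sum>i. cmod (x 0 i) powr q)"
        by (rule sum_le_suminf[OF sm]) auto
      then have "(\<Sum>j<K. cmod (x 0 j) powr q) powr (1 / q) \<le> (\<Sum>i. cmod (x 0 i) powr q) powr (1 / q)"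
        using q1 by (intro powr_mono2) (auto intro: sum_nonneg)
      then show ?thesis using xn by simp
    qed
    have h3: "(\<Sum>j<K. (w * cmod (P j)) powr p) = cw * (\<Sum>t\<in>Tset M m N. cmod (Pm M m N a t Y) powr p)"
    proof -
      have wp: "w powr p = cw" using p1 cw0 by (simp add: w_def powr_powr)
      have "(\<Sum>j<K. (w * cmod (P j)) powr p) = (\<Sum>j<K. cw * cmod (P j) powr p)"
        by (simp add: powr_mult wp)
      also have "\<dots> = cw * (\<Sum>t\<in>Tset M m N. cmod (Pm M m N a t Y) powr p)"
        unfolding P_def sum_distrib_left[symmetric] by (subst reidx) simp
      finally show ?thesis .
    qed
    have h4: "(\<Sum>j<K. (w * cmod (P j)) powr p) powr (1 / p) \<le> (cw * (R powr p * Bf)) powr (1 / p)"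
      unfolding h3 using p1 cw0 core' by (intro powr_mono2 mult_left_mono) (auto intro!: sum_nonneg mult_nonneg_nonneg)
    have h5: "(cw * (R powr p * Bf)) powr (1 / p) = R * E_MMp m M p N a"
    proof -
      have "(cw * (R powr p * Bf)) powr (1 / p) = (R powr p) powr (1 / p) * (cw * Bf) powr (1 / p)"
        by (simp add: powr_mult[symmetric] algebra_simps)
      also have "(R powr p) powr (1 / p) = R" using p1 R0 by (simp add: powr_powr)
      finally show ?thesis by (simp add: E)
    qed
    have "(\<Sum>j<K. (w * cmod (P j)) * cmod (x 0 j)) \<le> (\<Sum>j<K. (w * cmod (P j)) powr p) powr (1 / p) * 1"
      using h h2 by (meson order_trans mult_left_mono powr_ge_zero)
    also have "\<dots> \<le> R * E_MMp m M p N a" using h4 h5 by simp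
    finally show ?thesis using st by (simp add: R_def)
  qed
qed



lemma inner_sum:
  assumes M: "2 \<le> M" and p: "1 \<le> p" and K: "K = card (Tset M m N)" and l: "length is = m"
  shows "(\<Sum>\<^sub>\<infinity>j. cmod (coef m (Tform M m N a p K e) j is) powr p) = (if is \<in> idx m N then cmod (a is) powr p else 0)"
proof -
  define cw where "cw = (1 / real M) ^ (N * m)"
  define w where "w = cw powr (1 / p)"
  have cw0: "0 \<le> cw" by (simp add: cw_def)
  have wp: "w powr p = cw" using p cw0 by (simp add: w_def powr_powr)
  have Kc: "real K * cw = 1" using M by (simp add: K card_Tset cw_def power_one_over)
  define f where "f j = (if j < K \<and> is \<in> idx m N then cw * cmod (a is) powr p else 0)" for j
  have fj: "cmod (coef m (Tform M m N a p K e) j is) powr p = f j" for j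
  proof (cases "j < K \<and> is \<in> idx m N")
    case True
    have "cmod (coef m (Tform M m N a p K e) j is) = w * cmod (a is)"
      using True cw0 by (simp add: coef_Tform[OF l] norm_mult prod_norm[symmetric] w_def cw_def)
    then show ?thesis using True cw0 by (simp add: f_def powr_mult wp)
  next
    case False
    have "coef m (Tform M m N a p K e) j is = 0" using False by (simp only: coef_Tform[OF l] if_False)
    then show ?thesis using False by (auto simp: f_def)
  qed
  have "(\<Sum>\<^sub>\<infinity>j. cmod (coef m (Tform M m N a p K e) j is) powr p) = infsum f UNIV"
    by (simp add: fj)
  also have "\<dots> = infsum f {..<K}"
    by (rule infsum_cong_neutral) (auto simp: f_def)
  also have "\<dots> = (\<Sum>j<K. f j)" by simp
  also have "\<dots> = (if is \<in> idx m N then cmod (a is) powr p else 0)"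
    using Kc by (simp add: f_def mult.assoc[symmetric])
  finally show ?thesis .
qed

lemma adm_lhs:
  assumes M: "2 \<le> M" and p: "1 \<le> p" and K: "K = card (Tset M m N)"
  shows "sqrt (\<Sum>\<^sub>\<infinity>xs\<in>{xs::nat list. length xs = m}. (\<Sum>\<^sub>\<infinity>j. cmod (coef m (Tform M m N a p K e) j xs) powr p) powr (2 / p))
     = l2norm_arr m N a"
proof -
  have "(\<Sum>\<^sub>\<infinity>xs\<in>{xs::nat list. length xs = m}. (\<Sum>\<^sub>\<infinity>j. cmod (coef m (Tform M m N a p K e) j xs) powr p) powr (2 / p))
      = (\<Sum>\<^sub>\<infinity>xs\<in>{xs::nat list. length xs = m}. (if xs \<in> idx m N then (cmod (a xs))\<^sup>2 else 0))"
  proof (rule infsum_cong)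
    fix xs assume "xs \<in> {xs::nat list. length xs = m}"
    then have l: "length xs = m" by simp
    have "(cmod (a xs) powr p) powr (2 / p) = (cmod (a xs))\<^sup>2"
      using p by (simp add: powr_powr)
    then show "(\<Sum>\<^sub>\<infinity>j. cmod (coef m (Tform M m N a p K e) j xs) powr p) powr (2 / p) = (if xs \<in> idx m N then (cmod (a xs))\<^sup>2 else 0)"
      using p by (simp add: inner_sum[OF M p K l])
  qed
  also have "\<dots> = (\<Sum>\<^sub>\<infinity>xs\<in>idx m N. (cmod (a xs))\<^sup>2)"
    by (rule infsum_cong_neutral) (auto simp: idx_def)
  also have "\<dots> = (\<Sum>xs\<in>idx m N. (cmod (a xs))\<^sup>2)" by simp
  finally show ?thesis by (simp add: l2norm_arr_def)
qed

lemma E_zero: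
  assumes p: "1 \<le> p" and z: "\<And>ns. ns \<in> idx m N \<Longrightarrow> a ns = 0"
  shows "E_MMp m M p N a = 0"
proof -
  have "Fm M m N a t = 0" for t by (simp add: Fm_def z)
  then show ?thesis using p by (simp add: E_MMp_alt)
qed

lemma part2:
  assumes M: "3 \<le> M" and p: "1 \<le> p" and c: "C_admissible m p c"
  shows "l2norm_arr m N a \<le> (c * r_M M powr (- real m)) * E_MMp m M p N a"
proof -
  have M2: "2 \<le> M" using M by simp
  define K where "K = card (Tset M m N)"
  obtain e where e: "bij_betw e {0..<K} (Tset M m N)"
    using ex_bij_betw_nat_finite[OF finite_Tset] unfolding K_def by blast
  define T where "T = Tform M m N a p K e"
  define RE where "RE = r_M M powr (- real m) * E_MMp m M p N a"
  have bd: "cmod (T x) \<le> RE" if "in_ball m p x" for x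
    unfolding T_def RE_def by (rule Tform_bound[OF M p e that])
  define Sx where "Sx = {cmod (T x) | x. in_ball m p x}"
  have ne: "cmod (T (\<lambda>k i. 0)) \<in> Sx" using zero_in_ball by (auto simp: Sx_def)
  have bdd: "bdd_above Sx" using bd by (auto simp: Sx_def intro!: bdd_aboveI)
  have ml: "multilinear_form m p T" unfolding T_def by (rule Tform_multilinear)
  have bf: "bounded_form m p T" using bdd by (simp add: bounded_form_def Sx_def)
  have fn_le: "form_norm m p T \<le> RE"
    unfolding form_norm_def Sx_def[symmetric]
    by (rule cSup_least) (use ne bd in \<open>auto simp: Sx_def\<close>)
  have fn_ge: "0 \<le> form_norm m p T"
  proof -
    have "cmod (T (\<lambda>k i. 0)) \<le> Sup Sx" by (rule cSup_upper[OF ne bdd])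
    then show ?thesis unfolding form_norm_def Sx_def[symmetric] by (meson norm_ge_zero order_trans)
  qed
  have "sqrt (\<Sum>\<^sub>\<infinity>is\<in>{is. length is = m}. (\<Sum>\<^sub>\<infinity>j. cmod (coef m T j is) powr p) powr (2 / p)) \<le> c * form_norm m p T"
    using c ml bf unfolding C_admissible_def by blast
  then have main: "l2norm_arr m N a \<le> c * form_norm m p T"
    unfolding T_def adm_lhs[OF M2 p K_def] .
  show ?thesis
  proof (cases "l2norm_arr m N a = 0")
    case True
    then have "\<forall>ns\<in>idx m N. (cmod (a ns))\<^sup>2 = 0"
      by (simp add: l2norm_arr_def sum_nonneg_eq_0_iff)
    then have "E_MMp m M p N a = 0" using p by (intro E_zero) auto
    then show ?thesis using True by simp
  next
    case False
    then have l0: "0 < l2norm_arr m N a" using l2norm_nonneg[of m N a] by simp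
    have c0: "0 < c"
    proof (rule ccontr)
      assume "\<not> 0 < c"
      then have "c * form_norm m p T \<le> 0" using fn_ge by (simp add: mult_nonpos_nonneg)
      then show False using main l0 by simp
    qed
    have "l2norm_arr m N a \<le> c * RE" using main fn_le c0 by (meson mult_left_mono order_trans less_imp_le)
    then show ?thesis by (simp add: RE_def mult.assoc)
  qed
qed

theorem mainTheorem7:
  fixes p :: real and m M :: nat
  assumes "1 \<le> p" and "p \<le> 2" and "1 \<le> m" and "2 \<le> M"
  shows "(\<exists>S\<ge>1. \<forall>N (a :: nat list \<Rightarrow> complex). l2norm_arr m N a \<le> S * E_MMp m M p N a)
       \<and> (3 \<le> M \<longrightarrow> (\<forall>c. C_admissible m p c \<longrightarrow>
            (\<forall>N (a :: nat list \<Rightarrow> complex). l2norm_arr m N a \<le> (c * r_M M powr (- real m)) * E_MMp m M p N a)))"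
proof (intro conjI impI allI)
  show "\<exists>S\<ge>1. \<forall>N (a :: nat list \<Rightarrow> complex). l2norm_arr m N a \<le> S * E_MMp m M p N a"
    by (rule exI[of _ "2 ^ m"]) (use part1[OF assms(1,4)] in simp)
next
  fix c N and a :: "nat list \<Rightarrow> complex"
  assume "3 \<le> M" "C_admissible m p c"
  then show "l2norm_arr m N a \<le> (c * r_M M powr (- real m)) * E_MMp m M p N a"
    using part2 assms(1) by blast
qed


end
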